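(* Let $f\in M^1$, $N\in L^1(\mathbb{R}^2)$, and suppose $G=V_\varphi f+N$ is observed. Let $\Delta$ be the support of $N$ (unknown), and suppose that for some $R>0$, \[ \rho(\Delta,R)<\tfrac12\left(1-e^{-\pi/R^2}\right). \] Then $\delta(\Delta)<\tfrac12$, and the minimization problem \[ \beta(G)=\arg\min_{g\in M^1}\Vert G-V_\varphi g\Vert_1 \] has a unique solution, which satisfies $\beta(G)=f$.
   Context: Let $\varphi(t)=2^{1/4}e^{-\pi t^2}$. The STFT is $V_\varphi f(x,\omega)=\int_{\mathbb{R}} f(t)\overline{\varphi(t-x)}e^{-2\pi i \omega t}\,dt$. The modulation space $M^1$ is $\{f\in\mathcal{S}'(\mathbb{R}): \Vert V_\varphi f\Vert_{1}<\infty\}$, with $\Vert\cdot\Vert_1$ the $L^1(\mathbb{R}^2)$ norm. For $A\subset\mathbb{R}^2$, $P_A$ is multiplication by $\chi_A$. The planar maximum Nyquist density is $\rho(\Delta,R):=\sup_{z\in\mathbb{R}^2}|\Delta\cap(z+D_{1/R})|$, with $D_{1/R}$ the disc of radius $1/R$ centered at the origin and $|\cdot|$ Lebesgue measure. Also $\delta(\Delta):=\sup_{f\in M^1}\frac{\Vert P_\Delta(V_\varphi f)\Vert_1}{\Vert V_\varphi f\Vert_1}$ (supremum over nonzero $f$). *)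

theory Defs
  imports "HOL-Analysis.Analysis"
begin

definition gwin :: "real \<Rightarrow> real" where
  "gwin t = 2 powr (1/4) * exp (- pi * t\<^sup>2)"

definition stft :: "(real \<Rightarrow> complex) \<Rightarrow> real \<times> real \<Rightarrow> complex" where
  "stft f = (\<lambda>(x, \<omega>). LINT t|lborel.
      f t * cnj (complex_of_real (gwin (t - x))) * exp (- 2 * complex_of_real pi * \<i> * complex_of_real \<omega> * complex_of_real t))"

definition L1norm :: "(real \<times> real \<Rightarrow> complex) \<Rightarrow> real" where
  "L1norm F = (\<integral>z. cmod (F z) \<partial>lborel)"

text \<open>Modulation space M^1, realised by its (integrable) function representatives:
  M^1 is continuously embedded in L^1(R).\<close>
definition M1 :: "(real \<Rightarrow> complex) set" where
  "M1 = {f. integrable lborel f \<and> integrable lborel (stft f)}"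

definition nyq_rho :: "(real \<times> real) set \<Rightarrow> real \<Rightarrow> real" where
  "nyq_rho \<Delta> R = (SUP z. measure lborel (\<Delta> \<inter> cball z (1 / R)))"

definition conc_delta :: "(real \<times> real) set \<Rightarrow> real" where
  "conc_delta \<Delta> = (SUP f \<in> {f \<in> M1. L1norm (stft f) \<noteq> 0}.
      L1norm (\<lambda>z. indicator \<Delta> z * stft f z) / L1norm (stft f))"

end

theory Submission
  imports Defs "HOL-Probability.Probability"
begin


lemma cont_meas: "continuous_on UNIV (f :: 'a::topological_space \<Rightarrow> 'b::topological_space) \<Longrightarrow> f \<in> borel_measurable borel"
  by (rule borel_measurable_continuous_onI)

lemma comp_meas2:
  fixes T :: "real \<times> real \<Rightarrow> real \<times> real"
  assumes "continuous_on UNIV T" "g \<in> borel_measurable borel"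
  shows "(\<lambda>z. g (T z)) \<in> borel_measurable borel"
  using measurable_compose[OF cont_meas[OF assms(1)] assms(2)] .

lemma nn_shear1:
  fixes g :: "real \<times> real \<Rightarrow> ennreal"
  assumes [measurable]: "g \<in> borel_measurable borel"
  shows "(\<integral>\<^sup>+z. g (fst z + c * snd z, snd z) \<partial>lborel) = (\<integral>\<^sup>+z. g z \<partial>lborel)"
proof -
  have [measurable]: "(\<lambda>z. g (fst z + c * snd z, snd z)) \<in> borel_measurable borel"
    by (rule comp_meas2[OF _ assms]) (intro continuous_intros)
  have "(\<integral>\<^sup>+z. g (fst z + c * snd z, snd z) \<partial>lborel)
      = (\<integral>\<^sup>+z. g (fst z + c * snd z, snd z) \<partial>(lborel \<Otimes>\<^sub>M lborel))"
    by (simp add: lborel_prod)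
  also have "(\<integral>\<^sup>+z. g (fst z + c * snd z, snd z) \<partial>(lborel \<Otimes>\<^sub>M lborel)) = (\<integral>\<^sup>+y. (\<integral>\<^sup>+x. g (x + c * y, y) \<partial>lborel) \<partial>lborel)"
    by (subst lborel_pair.nn_integral_snd[symmetric]) (auto simp: lborel_prod)
  also have "\<dots> = (\<integral>\<^sup>+y. (\<integral>\<^sup>+x. g (x, y) \<partial>lborel) \<partial>lborel)"
  proof (rule nn_integral_cong)
    fix y :: real
    have "(\<integral>\<^sup>+x. g (x, y) \<partial>lborel) = ennreal \<bar>1\<bar> * (\<integral>\<^sup>+x. g (c * y + 1 * x, y) \<partial>lborel)"
      by (rule nn_integral_real_affine) auto
    then show "(\<integral>\<^sup>+x. g (x + c * y, y) \<partial>lborel) = (\<integral>\<^sup>+x. g (x, y) \<partial>lborel)"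
      by (simp add: add.commute)
  qed
  also have "\<dots> = (\<integral>\<^sup>+z. g z \<partial>(lborel \<Otimes>\<^sub>M lborel))"
    by (subst lborel_pair.nn_integral_snd[symmetric]) (auto simp: lborel_prod)
  also have "\<dots> = (\<integral>\<^sup>+z. g z \<partial>lborel)" by (simp add: lborel_prod)
  finally show ?thesis .
qed

lemma nn_shear2:
  fixes g :: "real \<times> real \<Rightarrow> ennreal"
  assumes [measurable]: "g \<in> borel_measurable borel"
  shows "(\<integral>\<^sup>+z. g (fst z, snd z + c * fst z) \<partial>lborel) = (\<integral>\<^sup>+z. g z \<partial>lborel)"
proof -
  have [measurable]: "(\<lambda>z. g (fst z, snd z + c * fst z)) \<in> borel_measurable borel"
    by (rule comp_meas2[OF _ assms]) (intro continuous_intros)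
  have "(\<integral>\<^sup>+z. g (fst z, snd z + c * fst z) \<partial>lborel)
      = (\<integral>\<^sup>+z. g (fst z, snd z + c * fst z) \<partial>(lborel \<Otimes>\<^sub>M lborel))"
    by (simp add: lborel_prod)
  also have "(\<integral>\<^sup>+z. g (fst z, snd z + c * fst z) \<partial>(lborel \<Otimes>\<^sub>M lborel)) = (\<integral>\<^sup>+x. (\<integral>\<^sup>+y. g (x, y + c * x) \<partial>lborel) \<partial>lborel)"
    by (subst lborel.nn_integral_fst[symmetric]) (auto simp: lborel_prod)
  also have "\<dots> = (\<integral>\<^sup>+x. (\<integral>\<^sup>+y. g (x, y) \<partial>lborel) \<partial>lborel)"
  proof (rule nn_integral_cong)
    fix x :: real
    have "(\<integral>\<^sup>+y. g (x, y) \<partial>lborel) = ennreal \<bar>1\<bar> * (\<integral>\<^sup>+y. g (x, c * x + 1 * y) \<partial>lborel)"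
      by (rule nn_integral_real_affine) auto
    then show "(\<integral>\<^sup>+y. g (x, y + c * x) \<partial>lborel) = (\<integral>\<^sup>+y. g (x, y) \<partial>lborel)"
      by (simp add: add.commute)
  qed
  also have "\<dots> = (\<integral>\<^sup>+z. g z \<partial>(lborel \<Otimes>\<^sub>M lborel))"
    by (subst lborel.nn_integral_fst[symmetric]) (auto simp: lborel_prod)
  also have "\<dots> = (\<integral>\<^sup>+z. g z \<partial>lborel)" by (simp add: lborel_prod)
  finally show ?thesis .
qed

definition rot :: "real \<Rightarrow> real \<Rightarrow> real \<times> real \<Rightarrow> real \<times> real" where
  "rot a b z = (a * fst z - b * snd z, b * fst z + a * snd z)"

lemma rot_measurable[measurable]: "rot a b \<in> borel_measurable borel"
  unfolding rot_def by (rule cont_meas) (intro continuous_intros)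

lemma nn_rot:
  fixes g :: "real \<times> real \<Rightarrow> ennreal"
  assumes [measurable]: "g \<in> borel_measurable borel" and ab: "a\<^sup>2 + b\<^sup>2 = 1" "a \<noteq> -1"
  shows "(\<integral>\<^sup>+z. g (rot a b z) \<partial>lborel) = (\<integral>\<^sup>+z. g z \<partial>lborel)"
proof -
  define t where "t = - b / (1 + a)"
  have a1: "1 + a \<noteq> 0" using ab by auto
  have key: "rot a b z = (let z1 = (fst z + t * snd z, snd z); z2 = (fst z1, snd z1 + b * fst z1)
      in (fst z2 + t * snd z2, snd z2))" for z
  proof -
    have e1: "1 + t * b = a" unfolding t_def using a1 ab
      by (simp add: field_simps power2_eq_square) (smt (verit) power2_eq_square ab(1))?
    have bb: "2 * (1 + a) - b\<^sup>2 = (1 + a)\<^sup>2" using ab(1) by (simp add: power2_eq_square algebra_simps)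
    have ta: "t * (1 + a) = - b" unfolding t_def using a1 by simp
    have "t * (2 + t * b) * (1 + a)\<^sup>2 = (t * (1 + a)) * (2 * (1 + a) + (t * (1 + a)) * b)"
      by (simp add: power2_eq_square algebra_simps)
    also have "\<dots> = - b * (2 * (1 + a) - b\<^sup>2)" using ta by (simp add: algebra_simps power2_eq_square)
    also have "\<dots> = (- b) * (1 + a)\<^sup>2" using bb by simp
    finally have "t * (2 + t * b) * (1 + a)\<^sup>2 = (- b) * (1 + a)\<^sup>2" .
    then have tt: "t * (2 + t * b) = - b" using a1 by (subst (asm) mult_right_cancel) auto
    have "fst z + t * snd z + t * (snd z + b * (fst z + t * snd z))
          = (1 + t*b) * fst z + (t * (2 + t * b)) * snd z" by (simp add: algebra_simps)
    also have "\<dots> = a * fst z + (- b) * snd z" by (simp only: e1 tt)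
    finally have "fst z + t * snd z + t * (snd z + b * (fst z + t * snd z)) = a * fst z - b * snd z"
      by simp
    moreover have "snd z + b * (fst z + t * snd z) = b * fst z + a * snd z"
    proof -
      have "snd z + b * (fst z + t * snd z) = b * fst z + (1 + t * b) * snd z" by (simp add: algebra_simps)
      then show ?thesis by (simp only: e1)
    qed
    ultimately show ?thesis by (simp add: rot_def Let_def)
  qed
  define g1 where "g1 z = g (fst z + t * snd z, snd z)" for z
  define g2 where "g2 z = g1 (fst z, snd z + b * fst z)" for z
  have [measurable]: "g1 \<in> borel_measurable borel" "g2 \<in> borel_measurable borel"
  proof -
    show g1m: "g1 \<in> borel_measurable borel" unfolding g1_def
      by (rule comp_meas2[OF _ assms(1)]) (intro continuous_intros)
    show "g2 \<in> borel_measurable borel" unfolding g2_def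
      by (rule comp_meas2[OF _ g1m]) (intro continuous_intros)
  qed
  have "(\<integral>\<^sup>+z. g (rot a b z) \<partial>lborel) = (\<integral>\<^sup>+z. g2 (fst z + t * snd z, snd z) \<partial>lborel)"
    unfolding key Let_def g1_def g2_def by simp
  also have "\<dots> = (\<integral>\<^sup>+z. g2 z \<partial>lborel)" by (rule nn_shear1) simp
  also have "\<dots> = (\<integral>\<^sup>+z. g1 z \<partial>lborel)" unfolding g2_def by (rule nn_shear2) simp
  also have "\<dots> = (\<integral>\<^sup>+z. g z \<partial>lborel)" unfolding g1_def by (rule nn_shear1) simp
  finally show ?thesis .
qed

lemma distr_rot:
  assumes ab: "a\<^sup>2 + b\<^sup>2 = 1" "a \<noteq> -1"
  shows "distr lborel borel (rot a b) = lborel"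
proof (rule measure_eqI)
  show "sets (distr lborel borel (rot a b)) = sets lborel" by simp
  fix A assume A: "A \<in> sets (distr lborel borel (rot a b))"
  then have [measurable]: "A \<in> sets borel" by simp
  have "emeasure (distr lborel borel (rot a b)) A = emeasure lborel (rot a b -` A \<inter> space lborel)"
    by (rule emeasure_distr) auto
  also have "\<dots> = (\<integral>\<^sup>+z. indicator A (rot a b z) \<partial>lborel)"
    by (subst nn_integral_indicator[symmetric]) (auto simp: indicator_def intro!: nn_integral_cong measurable_sets_borel[OF rot_measurable])
  also have "\<dots> = (\<integral>\<^sup>+z. indicator A z \<partial>lborel)"
    by (rule nn_rot[OF _ ab]) simp
  also have "\<dots> = emeasure lborel A" by simp
  finally show "emeasure (distr lborel borel (rot a b)) A = emeasure lborel A" .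
qed

lemma integral_rot:
  fixes Q :: "real \<times> real \<Rightarrow> complex"
  assumes [measurable]: "Q \<in> borel_measurable borel" and ab: "a\<^sup>2 + b\<^sup>2 = 1" "a \<noteq> -1"
  shows "(\<integral>z. Q (rot a b z) \<partial>lborel) = (\<integral>z. Q z \<partial>lborel)"
proof -
  have "(\<integral>z. Q z \<partial>lborel) = (\<integral>z. Q z \<partial>distr lborel borel (rot a b))"
    using distr_rot[OF ab] by simp
  also have "\<dots> = (\<integral>z. Q (rot a b z) \<partial>lborel)"
    by (rule integral_distr) auto
  finally show ?thesis by simp
qed



definition xi :: "real \<times> real \<Rightarrow> complex" where
  "xi z = Complex (fst z) (- snd z)"

lemma xi_cont[continuous_intros]: "continuous_on S xi"
  unfolding xi_def by (intro continuous_intros)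

lemma norm_pair_eq: "norm (z::real\<times>real) = sqrt ((fst z)\<^sup>2 + (snd z)\<^sup>2)"
  by (cases z) (simp add: norm_Pair)

lemma norm_xi: "cmod (xi z) = norm z"
  by (cases z) (simp add: xi_def cmod_def norm_Pair)

lemma measure_cball2: "s \<ge> 0 \<Longrightarrow> measure lborel (cball (c::real\<times>real) s) = pi * s\<^sup>2"
  by (simp add: measure_def emeasure_cball unit_ball_vol_2 power2_eq_square)

lemma cball_meas[measurable]: "cball (c::real\<times>real) s \<in> sets lborel"
  by simp

lemma moment_zero:
  assumes n: "n \<ge> 1"
  shows "(\<integral>z. indicator (cball 0 s) z *\<^sub>R xi z ^ n \<partial>lborel) = 0"
proof -
  define \<theta> where "\<theta> = pi / (2 * real n)"
  define a where "a = cos \<theta>"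
  define b where "b = sin \<theta>"
  have ab: "a\<^sup>2 + b\<^sup>2 = 1" unfolding a_def b_def by simp
  have th: "0 < \<theta>" "\<theta> \<le> pi / 2" unfolding \<theta>_def using n by (auto simp: field_simps)
  have "a \<ge> 0" unfolding a_def using th by (intro cos_ge_zero) auto
  then have an: "a \<noteq> -1" by auto
  define Q where "Q z = indicator (cball 0 s) z *\<^sub>R xi z ^ n" for z
  have Qm: "Q \<in> borel_measurable borel" unfolding Q_def
    by (intro borel_measurable_scaleR borel_measurable_indicator borel_measurable_power
        cont_meas continuous_intros) simp
  define u where "u = Complex a (- b)"
  have rx: "xi (rot a b z) = u * xi z" for z
    by (simp add: xi_def rot_def u_def complex_eq_iff algebra_simps)
  have nr: "norm (rot a b z) = norm z" for z
  proof -
    have "(a * fst z - b * snd z)\<^sup>2 + (b * fst z + a * snd z)\<^sup>2 = (a\<^sup>2 + b\<^sup>2) * ((fst z)\<^sup>2 + (snd z)\<^sup>2)"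
      by (simp add: power2_eq_square algebra_simps)
    then show ?thesis using ab by (simp add: rot_def norm_pair_eq[of z] norm_Pair)
  qed
  have QR: "Q (rot a b z) = u ^ n * Q z" for z
    unfolding Q_def using nr[of z] by (simp add: rx power_mult_distrib indicator_def)
  have un: "u ^ n = cis (- pi / 2)"
  proof -
    have "u = cis (- \<theta>)" by (simp add: u_def a_def b_def complex_eq_iff)
    then have "u ^ n = cis (- \<theta>) ^ n" by simp
    also have "\<dots> = cis (real n * (- \<theta>))" by (rule Complex.DeMoivre)
    also have "real n * (- \<theta>) = - pi / 2" unfolding \<theta>_def using n by (simp add: field_simps)
    finally show ?thesis .
  qed
  have un1: "u ^ n \<noteq> 1" unfolding un by (simp add: complex_eq_iff)
  have "(\<integral>z. Q z \<partial>lborel) = (\<integral>z. Q (rot a b z) \<partial>lborel)"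
    by (rule integral_rot[OF Qm ab an, symmetric])
  also have "\<dots> = u ^ n * (\<integral>z. Q z \<partial>lborel)" by (simp add: QR)
  finally have "(1 - u ^ n) * (\<integral>z. Q z \<partial>lborel) = 0" by (simp add: algebra_simps)
  then show ?thesis using un1 unfolding Q_def by simp
qed

lemma integrable_ind_cont:
  fixes f :: "real \<times> real \<Rightarrow> complex"
  assumes "continuous_on UNIV f"
  shows "integrable lborel (\<lambda>z. indicator (cball 0 s) z *\<^sub>R f z)"
  by (rule borel_integrable_compact) (auto intro: continuous_on_subset[OF assms])

lemma mean_exp_quad:
  fixes \<alpha> \<beta> :: complex
  assumes s: "s \<ge> 0"
  shows "(\<integral>z. indicator (cball 0 s) z *\<^sub>R exp (\<alpha> * xi z ^ 2 + \<beta> * xi z) \<partial>lborel) = complex_of_real (pi * s\<^sup>2)"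
proof -
  define S where "S = cball (0::real\<times>real) s"
  define q where "q z = \<alpha> * xi z ^ 2 + \<beta> * xi z" for z
  have qc: "continuous_on UNIV q" unfolding q_def by (intro continuous_intros)
  define f where "f k z = indicator S z *\<^sub>R (q z ^ k /\<^sub>R fact k)" for k z
  define B where "B = cmod \<alpha> * s\<^sup>2 + cmod \<beta> * s"
  have qB: "z \<in> S \<Longrightarrow> cmod (q z) \<le> B" for z
  proof -
    assume "z \<in> S"
    then have nz: "norm z \<le> s" by (simp add: S_def)
    have "cmod (q z) \<le> cmod \<alpha> * (norm z)\<^sup>2 + cmod \<beta> * norm z"
      unfolding q_def using norm_triangle_ineq[of "\<alpha> * xi z ^ 2" "\<beta> * xi z"]
      by (simp add: norm_mult norm_power norm_xi)
    also have "\<dots> \<le> B" unfolding B_def using nz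
      by (intro add_mono mult_left_mono power_mono) auto
    finally show ?thesis .
  qed
  have fint: "integrable lborel (f k)" for k
    unfolding f_def S_def by (rule integrable_ind_cont) (intro continuous_intros qc)
  have fnorm: "norm (f k z) \<le> indicator S z * (B ^ k / fact k)" for k z
  proof (cases "z \<in> S")
    case True
    have "norm (q z ^ k /\<^sub>R fact k) = cmod (q z) ^ k / fact k" by (simp add: norm_power field_simps)
    also have "\<dots> \<le> B ^ k / fact k"
      by (intro divide_right_mono power_mono qB True) auto
    finally show ?thesis using True by (simp add: f_def)
  qed (simp add: f_def)
  have mS: "measure lborel S = pi * s\<^sup>2" unfolding S_def using s by (rule measure_cball2)
  have finS: "emeasure lborel S < \<infinity>" unfolding S_def by (intro emeasure_bounded_finite) simp
  have intS: "integrable lborel (\<lambda>z. indicator S z * c)" for c :: real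
    using finS by (intro integrable_mult_left integrable_real_indicator) (auto simp: S_def)
  have exp_eq: "indicator S z *\<^sub>R exp (q z) = (\<Sum>k. f k z)" for z
    by (cases "z \<in> S") (simp_all add: f_def exp_def)
  have summ: "summable (\<lambda>k. norm (f k z))" for z
    by (rule summable_comparison_test[OF _ summable_mult[OF summable_exp_generic[of B], of "indicator S z"]])
       (use fnorm in \<open>auto simp: divide_inverse mult_ac\<close>)
  have intnorm: "(\<integral>z. norm (f k z) \<partial>lborel) \<le> measure lborel S * (B ^ k / fact k)" for k
  proof -
    have "(\<integral>z. norm (f k z) \<partial>lborel) \<le> (\<integral>z. indicator S z * (B ^ k / fact k) \<partial>lborel)"
      by (intro integral_mono integrable_norm fint intS fnorm)
    also have "\<dots> = measure lborel S * (B ^ k / fact k)"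
      using finS by (simp add: S_def)
    finally show ?thesis .
  qed
  have summ2: "summable (\<lambda>k. (\<integral>z. norm (f k z) \<partial>lborel))"
    by (rule summable_comparison_test[OF _ summable_mult[OF summable_exp_generic[of B], of "measure lborel S"]])
       (use intnorm in \<open>auto simp: divide_inverse mult_ac\<close>)
  have zero: "(\<integral>z. f k z \<partial>lborel) = 0" if k: "k \<ge> 1" for k
  proof -
    have "f k z = (\<Sum>j\<le>k. (of_nat (k choose j) * \<alpha> ^ j * \<beta> ^ (k - j) / fact k) *
                    (indicator S z *\<^sub>R xi z ^ (j + k)))" for z
    proof -
      have "q z ^ k = (xi z * (\<alpha> * xi z + \<beta>)) ^ k" unfolding q_def
        by (simp add: power2_eq_square algebra_simps)
      also have "\<dots> = xi z ^ k * (\<Sum>j\<le>k. of_nat (k choose j) * (\<alpha> * xi z) ^ j * \<beta> ^ (k - j))"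
        by (simp add: power_mult_distrib binomial_ring)
      also have "\<dots> = (\<Sum>j\<le>k. of_nat (k choose j) * \<alpha> ^ j * \<beta> ^ (k - j) * xi z ^ (j + k))"
        by (simp add: sum_distrib_left power_mult_distrib power_add mult_ac)
      finally show ?thesis unfolding f_def
        by (cases "z \<in> S") (simp_all add: sum_distrib_left divide_inverse scaleR_conv_of_real mult_ac)
    qed
    then have "(\<integral>z. f k z \<partial>lborel) = (\<integral>z. (\<Sum>j\<le>k. (of_nat (k choose j) * \<alpha> ^ j * \<beta> ^ (k - j) / fact k) *
                    (indicator S z *\<^sub>R xi z ^ (j + k))) \<partial>lborel)" by simp
    also have "\<dots> = (\<Sum>j\<le>k. (of_nat (k choose j) * \<alpha> ^ j * \<beta> ^ (k - j) / fact k) *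
                    (\<integral>z. indicator S z *\<^sub>R xi z ^ (j + k) \<partial>lborel))"
      apply (subst Bochner_Integration.integral_sum)
      subgoal by (auto intro!: integrable_mult_right integrable_ind_cont continuous_intros simp: S_def)
      apply (rule sum.cong, rule refl)
      by (rule integral_mult_right_zero)
    also have "\<dots> = 0" using k by (simp add: S_def moment_zero)
    finally show ?thesis .
  qed
  have f0: "(\<integral>z. f 0 z \<partial>lborel) = complex_of_real (pi * s\<^sup>2)"
  proof -
    have "(\<integral>z. f 0 z \<partial>lborel) = (\<integral>z. complex_of_real (indicator S z) \<partial>lborel)"
      by (simp add: f_def scaleR_conv_of_real)
    also have "\<dots> = complex_of_real (\<integral>z. indicator S z \<partial>lborel)" by simp
    also have "\<dots> = complex_of_real (pi * s\<^sup>2)" using finS mS by (simp add: S_def)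
    finally show ?thesis .
  qed
  have "(\<integral>z. indicator S z *\<^sub>R exp (q z) \<partial>lborel) = (\<integral>z. (\<Sum>k. f k z) \<partial>lborel)"
    by (simp add: exp_eq)
  also have "\<dots> = (\<Sum>k. (\<integral>z. f k z \<partial>lborel))"
    by (rule integral_suminf[OF fint _ summ2]) (simp add: summ)
  also have "\<dots> = complex_of_real (pi * s\<^sup>2)"
  proof -
    have "(\<lambda>k. (\<integral>z. f k z \<partial>lborel)) = (\<lambda>k. if k = 0 then (\<integral>z. f 0 z \<partial>lborel) else 0)"
      using zero by (auto intro!: ext)
    then show ?thesis using sums_unique[OF sums_single[of 0 "\<lambda>_. \<integral>z. f 0 z \<partial>lborel"]] f0 by simp
  qed
  finally show ?thesis unfolding S_def q_def .
qed



definition mfun :: "(real \<Rightarrow> complex) \<Rightarrow> real \<Rightarrow> real \<Rightarrow> real \<Rightarrow> complex" where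
  "mfun h x0 w0 t = h t * cnj (complex_of_real (gwin (t - x0))) *
      exp (- 2 * complex_of_real pi * \<i> * complex_of_real w0 * complex_of_real t)"

definition Efun :: "real \<Rightarrow> real \<Rightarrow> real \<times> real \<Rightarrow> complex" where
  "Efun x0 t w = exp (complex_of_real (- pi / 2) * xi w ^ 2 + complex_of_real (2 * pi * (t - x0)) * xi w)"

definition Ufun :: "real \<Rightarrow> real \<times> real \<Rightarrow> complex" where
  "Ufun x0 w = exp (\<i> * complex_of_real (- 2 * pi * snd w * x0 - pi * fst w * snd w))"

lemma stft_integrand_eq:
  "h t * cnj (complex_of_real (gwin (t - (x0 + a)))) *
      exp (- 2 * complex_of_real pi * \<i> * complex_of_real (w0 + b) * complex_of_real t)
   = Ufun x0 (a, b) * complex_of_real (exp (- pi * (a\<^sup>2 + b\<^sup>2) / 2)) * (mfun h x0 w0 t * Efun x0 t (a, b))"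
proof -
  define C where "C = complex_of_real (2 powr (1/4))"
  have g: "cnj (complex_of_real (gwin u)) = C * exp (complex_of_real (- pi * u\<^sup>2))" for u
    unfolding gwin_def C_def exp_of_real by simp
  define A1 where "A1 = complex_of_real (- pi * (t - (x0 + a))\<^sup>2)"
  define A2 where "A2 = - 2 * complex_of_real pi * \<i> * complex_of_real (w0 + b) * complex_of_real t"
  define B1 where "B1 = \<i> * complex_of_real (- 2 * pi * b * x0 - pi * a * b)"
  define B2 where "B2 = complex_of_real (- pi * (a\<^sup>2 + b\<^sup>2) / 2)"
  define B3 where "B3 = complex_of_real (- pi * (t - x0)\<^sup>2)"
  define B4 where "B4 = - 2 * complex_of_real pi * \<i> * complex_of_real w0 * complex_of_real t"
  define B5 where "B5 = complex_of_real (- pi / 2) * xi (a, b) ^ 2 + complex_of_real (2 * pi * (t - x0)) * xi (a, b)"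
  have L: "h t * cnj (complex_of_real (gwin (t - (x0 + a)))) *
      exp (- 2 * complex_of_real pi * \<i> * complex_of_real (w0 + b) * complex_of_real t)
      = h t * C * exp (A1 + A2)"
    unfolding g A1_def[symmetric] A2_def[symmetric] exp_add by (simp only: mult_ac)
  have R: "Ufun x0 (a, b) * complex_of_real (exp (- pi * (a\<^sup>2 + b\<^sup>2) / 2)) * (mfun h x0 w0 t * Efun x0 t (a, b))
      = h t * C * exp (B1 + B2 + (B3 + B4) + B5)"
  proof -
    have e2: "complex_of_real (exp (- pi * (a\<^sup>2 + b\<^sup>2) / 2)) = exp B2"
      unfolding B2_def by (simp only: exp_of_real)
    have m: "mfun h x0 w0 t = h t * C * exp (B3 + B4)"
      unfolding mfun_def g B3_def[symmetric] B4_def[symmetric] exp_add by (simp only: mult_ac)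
    have u: "Ufun x0 (a, b) = exp B1" unfolding Ufun_def B1_def by simp
    have ef: "Efun x0 t (a, b) = exp B5" unfolding Efun_def B5_def by simp
    show ?thesis unfolding e2 m u ef exp_add
      by (simp only: mult_ac)
  qed
  have E: "A1 + A2 = B1 + B2 + (B3 + B4) + B5"
    unfolding A1_def A2_def B1_def B2_def B3_def B4_def B5_def
    by (simp add: complex_eq_iff xi_def power2_eq_square algebra_simps) (simp add: field_simps)
  show ?thesis using L R E by simp
qed

lemma stft_shift:
  "stft h (x0 + a, w0 + b) = Ufun x0 (a, b) * complex_of_real (exp (- pi * (a\<^sup>2 + b\<^sup>2) / 2)) *
      (\<integral>t. mfun h x0 w0 t * Efun x0 t (a, b) \<partial>lborel)"
  unfolding stft_def prod.case stft_integrand_eq by (rule integral_mult_right_zero)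

lemma stft_base: "stft h (x0, w0) = (\<integral>t. mfun h x0 w0 t \<partial>lborel)"
  unfolding stft_def mfun_def by simp

lemma norm_Ufun: "cmod (Ufun x0 w) = 1"
  by (simp add: Ufun_def)



lemma meas_pair_lborel:
  fixes f :: "('a::euclidean_space \<times> 'b::euclidean_space) \<Rightarrow> 'c::topological_space"
  shows "f \<in> borel_measurable borel \<Longrightarrow> f \<in> borel_measurable (lborel \<Otimes>\<^sub>M lborel)"
  unfolding lborel_prod by (simp add: measurable_cong_sets[OF sets_lborel refl])

lemma xi_cont'[continuous_intros]: "continuous_on S f \<Longrightarrow> continuous_on S (\<lambda>x. xi (f x))"
  unfolding xi_def by (intro continuous_intros)

lemma cmod_diff_real: "cmod (complex_of_real t - complex_of_real x0) = \<bar>t - x0\<bar>"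
  by (metis norm_of_real of_real_diff)

lemma integrable_prod_mult:
  fixes f :: "'a::euclidean_space \<Rightarrow> real" and g :: "'b::euclidean_space \<Rightarrow> real"
  assumes f: "integrable lborel f" and g: "integrable lborel g"
  shows "integrable (lborel \<Otimes>\<^sub>M lborel) (\<lambda>p. f (fst p) * g (snd p))"
proof (rule integrableI_bounded)
  have [measurable]: "f \<in> borel_measurable lborel" "g \<in> borel_measurable lborel"
    using f g by auto
  show "(\<lambda>p. f (fst p) * g (snd p)) \<in> borel_measurable (lborel \<Otimes>\<^sub>M lborel)" by measurable
  have "(\<integral>\<^sup>+p. ennreal (norm (f (fst p) * g (snd p))) \<partial>(lborel \<Otimes>\<^sub>M lborel))
      = (\<integral>\<^sup>+x. (\<integral>\<^sup>+y. ennreal (norm (f x)) * ennreal (norm (g y)) \<partial>lborel) \<partial>lborel)"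
    by (subst lborel.nn_integral_fst[symmetric]) (auto simp: abs_mult ennreal_mult)
  also have "\<dots> = (\<integral>\<^sup>+x. ennreal (norm (f x)) * (\<integral>\<^sup>+y. ennreal (norm (g y)) \<partial>lborel) \<partial>lborel)"
    by (subst nn_integral_cmult) auto
  also have "\<dots> = (\<integral>\<^sup>+x. ennreal (norm (f x)) \<partial>lborel) * (\<integral>\<^sup>+y. ennreal (norm (g y)) \<partial>lborel)"
    by (subst nn_integral_multc) auto
  also have "\<dots> < \<infinity>"
    using f g unfolding integrable_iff_bounded by (simp add: ennreal_mult_less_top)
  finally show "(\<integral>\<^sup>+p. ennreal (norm (f (fst p) * g (snd p))) \<partial>(lborel \<Otimes>\<^sub>M lborel)) < \<infinity>" .
qed

lemma mfun_meas[measurable]: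
  assumes "h \<in> borel_measurable lborel"
  shows "mfun h x0 w0 \<in> borel_measurable lborel"
proof -
  have [measurable]: "h \<in> borel_measurable borel" using assms by simp
  have c: "(\<lambda>t. cnj (complex_of_real (gwin (t - x0))) *
      exp (- 2 * complex_of_real pi * \<i> * complex_of_real w0 * complex_of_real t)) \<in> borel_measurable borel"
    by (rule cont_meas) (simp add: gwin_def, intro continuous_intros)
  show ?thesis unfolding mfun_def using c
    by (simp add: mult.assoc)
qed

lemma norm_mfun: "cmod (mfun h x0 w0 t) = cmod (h t) * 2 powr (1/4) * exp (- pi * (t - x0)\<^sup>2)"
  by (simp add: mfun_def gwin_def norm_mult)

lemma norm_Efun:
  assumes "norm w \<le> s"
  shows "cmod (Efun x0 t w) \<le> exp (pi * s\<^sup>2 / 2 + 2 * pi * \<bar>t - x0\<bar> * s)"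
proof -
  let ?q = "complex_of_real (- pi / 2) * xi w ^ 2 + complex_of_real (2 * pi * (t - x0)) * xi w"
  have "cmod (Efun x0 t w) = exp (Re ?q)" by (simp add: Efun_def)
  also have "Re ?q \<le> cmod ?q" by (rule complex_Re_le_cmod)
  also have "cmod ?q \<le> pi / 2 * (norm w)\<^sup>2 + 2 * pi * \<bar>t - x0\<bar> * norm w"
    using norm_triangle_ineq[of "complex_of_real (- pi / 2) * xi w ^ 2" "complex_of_real (2 * pi * (t - x0)) * xi w"]
    by (simp add: norm_mult norm_power norm_xi cmod_diff_real)
  also have "\<dots> \<le> pi * s\<^sup>2 / 2 + 2 * pi * \<bar>t - x0\<bar> * s"
  proof -
    have "(norm w)\<^sup>2 \<le> s\<^sup>2" using assms by (intro power_mono) auto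
    then show ?thesis using assms by (intro add_mono mult_left_mono divide_right_mono) auto
  qed
  finally show ?thesis by simp
qed

lemma gauss_bound:
  "exp (- pi * p\<^sup>2) * exp (pi * s\<^sup>2 / 2 + 2 * pi * \<bar>p\<bar> * s) \<le> exp (3 * pi * s\<^sup>2 / 2)"
proof -
  have "- pi * p\<^sup>2 + (pi * s\<^sup>2 / 2 + 2 * pi * \<bar>p\<bar> * s) = 3 * pi * s\<^sup>2 / 2 - pi * (\<bar>p\<bar> - s)\<^sup>2"
    by (simp add: power2_eq_square algebra_simps abs_mult_self_eq)
  also have "\<dots> \<le> 3 * pi * s\<^sup>2 / 2" by simp
  finally show ?thesis by (simp add: exp_add[symmetric])
qed

lemma submean_disc:
  assumes h: "integrable lborel h" and s: "s \<ge> 0"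
  shows "ennreal (pi * s\<^sup>2 * cmod (stft h (x0, w0)))
     \<le> (\<integral>\<^sup>+w. indicator (cball 0 s) w * ennreal (cmod (\<integral>t. mfun h x0 w0 t * Efun x0 t w \<partial>lborel)) \<partial>lborel)"
proof -
  define S where "S = cball (0::real\<times>real) s"
  define G where "G w t = indicator S w *\<^sub>R (mfun h x0 w0 t * Efun x0 t w)" for w t
  define K where "K = 2 powr (1/4) * exp (3 * pi * s\<^sup>2 / 2)"
  have hm[measurable]: "h \<in> borel_measurable lborel" using h by auto
  have Gm: "case_prod G \<in> borel_measurable (lborel \<Otimes>\<^sub>M lborel)"
  proof -
    have e: "(\<lambda>p::(real\<times>real)\<times>real. Efun x0 (snd p) (fst p)) \<in> borel_measurable (lborel \<Otimes>\<^sub>M lborel)"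
      by (rule meas_pair_lborel, rule cont_meas) (simp add: Efun_def, intro continuous_intros, auto)
    have i: "(\<lambda>p::(real\<times>real)\<times>real. indicator S (fst p) :: real) \<in> borel_measurable (lborel \<Otimes>\<^sub>M lborel)"
      unfolding S_def by measurable
    have m: "(\<lambda>p::(real\<times>real)\<times>real. mfun h x0 w0 (snd p)) \<in> borel_measurable (lborel \<Otimes>\<^sub>M lborel)"
      by measurable
    show ?thesis unfolding G_def case_prod_beta using e i m
      by (intro borel_measurable_scaleR borel_measurable_times) auto
  qed
  have Gb: "norm (G w t) \<le> indicator S w * (K * cmod (h t))" for w t
  proof (cases "w \<in> S")
    case True
    then have nw: "norm w \<le> s" by (simp add: S_def)
    have "norm (G w t) = cmod (h t) * 2 powr (1/4) * (exp (- pi * (t - x0)\<^sup>2) * cmod (Efun x0 t w))"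
      using True by (simp add: G_def norm_mult norm_mfun)
    also have "\<dots> \<le> cmod (h t) * 2 powr (1/4) * (exp (- pi * (t - x0)\<^sup>2) * exp (pi * s\<^sup>2 / 2 + 2 * pi * \<bar>t - x0\<bar> * s))"
      by (intro mult_left_mono norm_Efun nw) auto
    also have "\<dots> \<le> cmod (h t) * 2 powr (1/4) * exp (3 * pi * s\<^sup>2 / 2)"
      by (intro mult_left_mono gauss_bound) auto
    finally show ?thesis using True by (simp add: K_def mult_ac)
  qed (simp add: G_def)
  have finS: "emeasure lborel S < \<infinity>" unfolding S_def by (intro emeasure_bounded_finite) simp
  have Gint: "integrable (lborel \<Otimes>\<^sub>M lborel) (case_prod G)"
  proof (rule Bochner_Integration.integrable_bound)
    show "integrable (lborel \<Otimes>\<^sub>M lborel) (\<lambda>p. indicator S (fst p) * (K * cmod (h (snd p))))"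
      using integrable_prod_mult[of "indicator S" "\<lambda>t. K * cmod (h t)"] finS h
      by (auto simp: S_def)
    show "case_prod G \<in> borel_measurable (lborel \<Otimes>\<^sub>M lborel)" by (rule Gm)
    show "AE p in lborel \<Otimes>\<^sub>M lborel. norm (case_prod G p) \<le> norm (indicator S (fst p) * (K * cmod (h (snd p))))"
    proof (rule AE_I2)
      fix p :: "(real \<times> real) \<times> real"
      have "0 \<le> K" unfolding K_def by simp
      then show "norm (case_prod G p) \<le> norm (indicator S (fst p) * (K * cmod (h (snd p))))"
        using Gb[of "fst p" "snd p"] by (simp add: case_prod_beta abs_mult)
    qed
  qed
  have in1: "(\<integral>t. G w t \<partial>lborel) = indicator S w *\<^sub>R (\<integral>t. mfun h x0 w0 t * Efun x0 t w \<partial>lborel)" for w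
    unfolding G_def by simp
  have in2: "(\<integral>w. G w t \<partial>lborel) = mfun h x0 w0 t * complex_of_real (pi * s\<^sup>2)" for t
  proof -
    have "(\<integral>w. G w t \<partial>lborel) = (\<integral>w. mfun h x0 w0 t * (indicator S w *\<^sub>R Efun x0 t w) \<partial>lborel)"
      unfolding G_def by (simp add: scaleR_conv_of_real mult_ac)
    also have "\<dots> = mfun h x0 w0 t * (\<integral>w. indicator S w *\<^sub>R Efun x0 t w \<partial>lborel)"
      by (rule integral_mult_right_zero)
    also have "(\<integral>w. indicator S w *\<^sub>R Efun x0 t w \<partial>lborel) = complex_of_real (pi * s\<^sup>2)"
      unfolding S_def Efun_def using s by (rule mean_exp_quad)
    finally show ?thesis .
  qed
  have fub: "(\<integral>w. (\<integral>t. G w t \<partial>lborel) \<partial>lborel) = (\<integral>t. (\<integral>w. G w t \<partial>lborel) \<partial>lborel)"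
    using lborel_pair.Fubini_integral[OF Gint] by simp
  have intw: "integrable lborel (\<lambda>w. \<integral>t. G w t \<partial>lborel)"
    using lborel_pair.integrable_fst[OF Gint] .
  have "(\<integral>w. indicator S w *\<^sub>R (\<integral>t. mfun h x0 w0 t * Efun x0 t w \<partial>lborel) \<partial>lborel)
       = complex_of_real (pi * s\<^sup>2) * stft h (x0, w0)"
    using fub unfolding in1 in2 stft_base by (simp add: mult_ac)
  then have "ennreal (pi * s\<^sup>2 * cmod (stft h (x0, w0)))
      = ennreal (norm (\<integral>w. indicator S w *\<^sub>R (\<integral>t. mfun h x0 w0 t * Efun x0 t w \<partial>lborel) \<partial>lborel))"
    using s by (simp add: norm_mult norm_power)
  also have "\<dots> \<le> (\<integral>\<^sup>+w. ennreal (norm (indicator S w *\<^sub>R (\<integral>t. mfun h x0 w0 t * Efun x0 t w \<partial>lborel))) \<partial>lborel)"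
    by (rule integral_norm_bound_ennreal) (use intw in1 in simp)
  also have "\<dots> = (\<integral>\<^sup>+w. indicator S w * ennreal (cmod (\<integral>t. mfun h x0 w0 t * Efun x0 t w \<partial>lborel)) \<partial>lborel)"
    by (intro nn_integral_cong) (simp add: indicator_def)
  finally show ?thesis unfolding S_def .
qed



lemma fst_borel_meas[measurable]: "fst \<in> borel_measurable (borel :: ('a::topological_space \<times> 'b::topological_space) measure)"
  by (rule cont_meas) (intro continuous_intros)

lemma snd_borel_meas[measurable]: "snd \<in> borel_measurable (borel :: ('a::topological_space \<times> 'b::topological_space) measure)"
  by (rule cont_meas) (intro continuous_intros)

definition gcake :: "real \<Rightarrow> real" where "gcake s = pi * s * exp (- pi * s\<^sup>2 / 2)"

lemma gcake_nonneg: "s \<ge> 0 \<Longrightarrow> gcake s \<ge> 0" by (simp add: gcake_def)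

lemma gcake_meas[measurable]: "gcake \<in> borel_measurable borel"
  unfolding gcake_def by (rule cont_meas) (intro continuous_intros, auto)

lemma FTC1:
  assumes "0 \<le> a" "a \<le> b"
  shows "(\<integral>\<^sup>+s. ennreal (gcake s) * indicator {a..b} s \<partial>lborel) = ennreal (exp (- pi * a\<^sup>2 / 2) - exp (- pi * b\<^sup>2 / 2))"
proof -
  have "(\<integral>\<^sup>+s\<in>{a..b}. ennreal (gcake s) \<partial>lborel) = ennreal ((- exp (- pi * b\<^sup>2 / 2)) - (- exp (- pi * a\<^sup>2 / 2)))"
  proof (rule nn_integral_FTC_Icc)
    show "gcake \<in> borel_measurable borel" by simp
    fix x assume "x \<in> {a..b}"
    then show "0 \<le> gcake x" using assms by (intro gcake_nonneg) auto
    show "((\<lambda>s. - exp (- pi * s\<^sup>2 / 2)) has_real_derivative gcake x) (at x)"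
      unfolding gcake_def by (auto intro!: derivative_eq_intros simp: power2_eq_square)
  qed (use assms in auto)
  then show ?thesis by (simp add: mult.commute)
qed

lemma FTC2:
  assumes "0 \<le> r"
  shows "(\<integral>\<^sup>+s. ennreal (gcake s * (pi * s\<^sup>2)) * indicator {0..r} s \<partial>lborel)
    = ennreal (2 - (2 + pi * r\<^sup>2) * exp (- pi * r\<^sup>2 / 2))"
proof -
  have "(\<integral>\<^sup>+s\<in>{0..r}. ennreal (gcake s * (pi * s\<^sup>2)) \<partial>lborel)
      = ennreal ((- (2 + pi * r\<^sup>2) * exp (- pi * r\<^sup>2 / 2)) - (- (2 + pi * 0\<^sup>2) * exp (- pi * 0\<^sup>2 / 2)))"
  proof (rule nn_integral_FTC_Icc)
    show "(\<lambda>s. gcake s * (pi * s\<^sup>2)) \<in> borel_measurable borel" by simp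
    fix x assume "x \<in> {0..r}"
    then show "0 \<le> gcake x * (pi * x\<^sup>2)" by (intro mult_nonneg_nonneg gcake_nonneg) auto
    show "((\<lambda>s. - (2 + pi * s\<^sup>2) * exp (- pi * s\<^sup>2 / 2)) has_real_derivative gcake x * (pi * x\<^sup>2)) (at x)"
      unfolding gcake_def by (auto intro!: derivative_eq_intros simp: power2_eq_square algebra_simps)
  qed (use assms in auto)
  also have "(- (2 + pi * r\<^sup>2) * exp (- pi * r\<^sup>2 / 2)) - (- (2 + pi * 0\<^sup>2) * exp (- pi * 0\<^sup>2 / 2))
     = 2 - (2 + pi * r\<^sup>2) * exp (- pi * r\<^sup>2 / 2)" by (simp add: algebra_simps)
  finally show ?thesis by (simp add: mult.commute)
qed

lemma layer_cake:
  fixes \<Phi> :: "real \<times> real \<Rightarrow> real"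
  assumes \<Phi>m[measurable]: "\<Phi> \<in> borel_measurable borel" and \<Phi>0: "\<And>w. \<Phi> w \<ge> 0"
    and r: "r \<ge> 0" and c: "c \<ge> 0"
    and sub: "\<And>s. 0 \<le> s \<Longrightarrow> s \<le> r \<Longrightarrow> ennreal (pi * s\<^sup>2 * c) \<le> (\<integral>\<^sup>+w. indicator (cball 0 s) w * ennreal (\<Phi> w) \<partial>lborel)"
  shows "ennreal (2 * (1 - exp (- pi * r\<^sup>2 / 2)) * c)
     \<le> (\<integral>\<^sup>+w. indicator (cball 0 r) w * ennreal (exp (- pi * (norm w)\<^sup>2 / 2) * \<Phi> w) \<partial>lborel)"
proof -
  define er where "er = exp (- pi * r\<^sup>2 / 2)"
  define A where "A = {p :: (real \<times> real) \<times> real. norm (fst p) \<le> snd p \<and> snd p \<le> r}"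
  have Aclosed: "closed A" unfolding A_def
    by (intro closed_Collect_conj closed_Collect_le continuous_intros)
  have Am[measurable]: "A \<in> sets borel" using Aclosed by simp
  have ptw: "indicator (cball 0 r) w * ennreal (exp (- pi * (norm w)\<^sup>2 / 2) * \<Phi> w)
      = ennreal er * (indicator (cball 0 r) w * ennreal (\<Phi> w))
        + (\<integral>\<^sup>+s. indicator A (w, s) * ennreal (gcake s) * ennreal (\<Phi> w) \<partial>lborel)" for w
  proof (cases "norm w \<le> r")
    case True
    have "(\<integral>\<^sup>+s. indicator A (w, s) * ennreal (gcake s) * ennreal (\<Phi> w) \<partial>lborel)
        = (\<integral>\<^sup>+s. ennreal (gcake s) * indicator {norm w..r} s \<partial>lborel) * ennreal (\<Phi> w)"
      by (subst nn_integral_multc[symmetric]) (auto intro!: nn_integral_cong simp: A_def indicator_def)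
    also have "\<dots> = ennreal (exp (- pi * (norm w)\<^sup>2 / 2) - er) * ennreal (\<Phi> w)"
      unfolding er_def using True by (subst FTC1) auto
    finally have I: "(\<integral>\<^sup>+s. indicator A (w, s) * ennreal (gcake s) * ennreal (\<Phi> w) \<partial>lborel)
        = ennreal (exp (- pi * (norm w)\<^sup>2 / 2) - er) * ennreal (\<Phi> w)" .
    have le: "er \<le> exp (- pi * (norm w)\<^sup>2 / 2)" unfolding er_def using True
      by (simp add: power_mono)
    have "ennreal (exp (- pi * (norm w)\<^sup>2 / 2) * \<Phi> w)
        = ennreal (er * \<Phi> w) + ennreal ((exp (- pi * (norm w)\<^sup>2 / 2) - er) * \<Phi> w)"
    proof -
      have e0: "0 \<le> er" unfolding er_def by simp
      have "er * \<Phi> w \<le> exp (- pi * (norm w)\<^sup>2 / 2) * \<Phi> w" using le \<Phi>0[of w] by (rule mult_right_mono)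
      then show ?thesis using e0 \<Phi>0[of w] by (subst ennreal_plus[symmetric]) (auto simp: algebra_simps)
    qed
    moreover have "ennreal (er * \<Phi> w) = ennreal er * ennreal (\<Phi> w)"
      using \<Phi>0[of w] by (simp add: ennreal_mult er_def)
    moreover have "ennreal ((exp (- pi * (norm w)\<^sup>2 / 2) - er) * \<Phi> w)
        = ennreal (exp (- pi * (norm w)\<^sup>2 / 2) - er) * ennreal (\<Phi> w)"
      using \<Phi>0[of w] le by (simp add: ennreal_mult)
    ultimately show ?thesis using True I by (simp add: ennreal_mult')
  next
    case False
    have "(\<integral>\<^sup>+s. indicator A (w, s) * ennreal (gcake s) * ennreal (\<Phi> w) \<partial>lborel) = 0"
      using False by (auto intro!: nn_integral_zero' simp: A_def indicator_def)
    then show ?thesis using False by simp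
  qed
  have "(\<integral>\<^sup>+w. indicator (cball 0 r) w * ennreal (exp (- pi * (norm w)\<^sup>2 / 2) * \<Phi> w) \<partial>lborel)
      = (\<integral>\<^sup>+w. ennreal er * (indicator (cball 0 r) w * ennreal (\<Phi> w)) \<partial>lborel)
        + (\<integral>\<^sup>+w. (\<integral>\<^sup>+s. indicator A (w, s) * ennreal (gcake s) * ennreal (\<Phi> w) \<partial>lborel) \<partial>lborel)"
    unfolding ptw
  proof (rule nn_integral_add)
    show "(\<lambda>w. ennreal er * (indicator (cball 0 r) w * ennreal (\<Phi> w))) \<in> borel_measurable lborel" by measurable
    show "(\<lambda>w. \<integral>\<^sup>+s. indicator A (w, s) * ennreal (gcake s) * ennreal (\<Phi> w) \<partial>lborel) \<in> borel_measurable lborel"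
    proof -
      have "(\<lambda>p. indicator A p * ennreal (gcake (snd p)) * ennreal (\<Phi> (fst p))) \<in> borel_measurable (lborel \<Otimes>\<^sub>M lborel)"
        by (rule meas_pair_lborel) measurable
      from lborel.borel_measurable_nn_integral_fst[OF this]
      have "(\<lambda>w. \<integral>\<^sup>+s. indicator A (w, s) * ennreal (gcake s) * ennreal (\<Phi> w) \<partial>lborel) \<in> borel_measurable lborel"
        by simp
      then show ?thesis by simp
    qed
  qed
  also have "(\<integral>\<^sup>+w. ennreal er * (indicator (cball 0 r) w * ennreal (\<Phi> w)) \<partial>lborel)
      = ennreal er * (\<integral>\<^sup>+w. indicator (cball 0 r) w * ennreal (\<Phi> w) \<partial>lborel)"
    by (rule nn_integral_cmult) measurable
  also have "(\<integral>\<^sup>+w. (\<integral>\<^sup>+s. indicator A (w, s) * ennreal (gcake s) * ennreal (\<Phi> w) \<partial>lborel) \<partial>lborel)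
      = (\<integral>\<^sup>+s. (\<integral>\<^sup>+w. indicator A (w, s) * ennreal (gcake s) * ennreal (\<Phi> w) \<partial>lborel) \<partial>lborel)"
  proof (rule lborel_pair.Fubini'[symmetric])
    show "(\<lambda>(w, s). indicator A (w, s) * ennreal (gcake s) * ennreal (\<Phi> w)) \<in> borel_measurable (lborel \<Otimes>\<^sub>M lborel)"
      by (rule meas_pair_lborel) (simp add: case_prod_beta', measurable)
  qed
  also have "\<dots> = (\<integral>\<^sup>+s. ennreal (gcake s) * indicator {0..r} s * (\<integral>\<^sup>+w. indicator (cball 0 s) w * ennreal (\<Phi> w) \<partial>lborel) \<partial>lborel)"
  proof (rule nn_integral_cong)
    fix s :: real
    have "(\<integral>\<^sup>+w. indicator A (w, s) * ennreal (gcake s) * ennreal (\<Phi> w) \<partial>lborel)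
        = (\<integral>\<^sup>+w. (ennreal (gcake s) * indicator {0..r} s) * (indicator (cball 0 s) w * ennreal (\<Phi> w)) \<partial>lborel)"
      by (intro nn_integral_cong) (auto simp: A_def indicator_def intro: order_trans[OF norm_ge_zero])
    also have "\<dots> = ennreal (gcake s) * indicator {0..r} s * (\<integral>\<^sup>+w. indicator (cball 0 s) w * ennreal (\<Phi> w) \<partial>lborel)"
      by (rule nn_integral_cmult) measurable
    finally show "(\<integral>\<^sup>+w. indicator A (w, s) * ennreal (gcake s) * ennreal (\<Phi> w) \<partial>lborel)
        = ennreal (gcake s) * indicator {0..r} s * (\<integral>\<^sup>+w. indicator (cball 0 s) w * ennreal (\<Phi> w) \<partial>lborel)" .
  qed
  finally have eq: "(\<integral>\<^sup>+w. indicator (cball 0 r) w * ennreal (exp (- pi * (norm w)\<^sup>2 / 2) * \<Phi> w) \<partial>lborel)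
      = ennreal er * (\<integral>\<^sup>+w. indicator (cball 0 r) w * ennreal (\<Phi> w) \<partial>lborel)
        + (\<integral>\<^sup>+s. ennreal (gcake s) * indicator {0..r} s * (\<integral>\<^sup>+w. indicator (cball 0 s) w * ennreal (\<Phi> w) \<partial>lborel) \<partial>lborel)" .
  have i1: "ennreal er * ennreal (pi * r\<^sup>2 * c) \<le> ennreal er * (\<integral>\<^sup>+w. indicator (cball 0 r) w * ennreal (\<Phi> w) \<partial>lborel)"
    by (intro mult_left_mono sub r) auto
  have i2: "(\<integral>\<^sup>+s. ennreal (gcake s * (pi * s\<^sup>2)) * indicator {0..r} s \<partial>lborel) * ennreal c
      \<le> (\<integral>\<^sup>+s. ennreal (gcake s) * indicator {0..r} s * (\<integral>\<^sup>+w. indicator (cball 0 s) w * ennreal (\<Phi> w) \<partial>lborel) \<partial>lborel)"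
  proof -
    have "(\<integral>\<^sup>+s. ennreal (gcake s * (pi * s\<^sup>2)) * indicator {0..r} s \<partial>lborel) * ennreal c
        = (\<integral>\<^sup>+s. ennreal (gcake s) * indicator {0..r} s * ennreal (pi * s\<^sup>2 * c) \<partial>lborel)"
      by (subst nn_integral_multc[symmetric])
         (auto intro!: nn_integral_cong simp: indicator_def ennreal_mult'[symmetric] gcake_nonneg mult_ac c)
    also have "\<dots> \<le> (\<integral>\<^sup>+s. ennreal (gcake s) * indicator {0..r} s * (\<integral>\<^sup>+w. indicator (cball 0 s) w * ennreal (\<Phi> w) \<partial>lborel) \<partial>lborel)"
    proof (intro nn_integral_mono)
      fix x :: real
      show "ennreal (gcake x) * indicator {0..r} x * ennreal (pi * x\<^sup>2 * c)
          \<le> ennreal (gcake x) * indicator {0..r} x * (\<integral>\<^sup>+w. indicator (cball 0 x) w * ennreal (\<Phi> w) \<partial>lborel)"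
        by (cases "x \<in> {0..r}") (auto intro!: mult_left_mono sub)
    qed
    finally show ?thesis .
  qed
  have "ennreal (2 * (1 - exp (- pi * r\<^sup>2 / 2)) * c)
      = ennreal er * ennreal (pi * r\<^sup>2 * c) + ennreal (2 - (2 + pi * r\<^sup>2) * er) * ennreal c"
  proof -
    have er1: "er \<le> 1" "0 < er" unfolding er_def by auto
    have nn: "0 \<le> 2 - (2 + pi * r\<^sup>2) * er"
    proof -
      have "(1 + pi * r\<^sup>2 / 2) \<le> exp (pi * r\<^sup>2 / 2)" by (rule exp_ge_add_one_self)
      then have "(1 + pi * r\<^sup>2 / 2) * er \<le> 1"
        unfolding er_def by (simp add: exp_minus field_simps)
      then show ?thesis by (simp add: algebra_simps)
    qed
    have "2 * (1 - exp (- pi * r\<^sup>2 / 2)) * c = er * (pi * r\<^sup>2 * c) + (2 - (2 + pi * r\<^sup>2) * er) * c"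
      unfolding er_def by (simp add: algebra_simps)
    then show ?thesis using nn er1 c r
      by (simp add: ennreal_plus[symmetric] ennreal_mult'[symmetric] del: ennreal_plus)
  qed
  also have "\<dots> \<le> ennreal er * (\<integral>\<^sup>+w. indicator (cball 0 r) w * ennreal (\<Phi> w) \<partial>lborel)
        + (\<integral>\<^sup>+s. ennreal (gcake s) * indicator {0..r} s * (\<integral>\<^sup>+w. indicator (cball 0 s) w * ennreal (\<Phi> w) \<partial>lborel) \<partial>lborel)"
    using i1 i2 unfolding FTC2[OF r] er_def[symmetric] by (rule add_mono)
  finally show ?thesis unfolding eq .
qed



lemma Psi_meas:
  assumes hm: "h \<in> borel_measurable lborel"
  shows "(\<lambda>w. \<integral>t. mfun h x0 w0 t * Efun x0 t w \<partial>lborel) \<in> borel_measurable lborel"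
proof -
  have e: "(\<lambda>p::(real\<times>real)\<times>real. Efun x0 (snd p) (fst p)) \<in> borel_measurable (lborel \<Otimes>\<^sub>M lborel)"
    by (rule meas_pair_lborel, rule cont_meas) (simp add: Efun_def, intro continuous_intros, auto)
  have m: "(\<lambda>p::(real\<times>real)\<times>real. mfun h x0 w0 (snd p)) \<in> borel_measurable (lborel \<Otimes>\<^sub>M lborel)"
    using hm by measurable
  have "(\<lambda>(w, t). mfun h x0 w0 t * Efun x0 t w) \<in> borel_measurable (lborel \<Otimes>\<^sub>M lborel)"
    unfolding case_prod_beta using e m by (rule borel_measurable_times[rotated])
  then show ?thesis by (rule lborel.borel_measurable_lebesgue_integral)
qed

lemma distr_translate: "distr lborel borel (\<lambda>x. z + x) = (lborel :: ('a::euclidean_space) measure)"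
  using lborel_affine[of 1 z] by (simp add: density_1)

lemma nn_translate:
  fixes f :: "'a::euclidean_space \<Rightarrow> ennreal"
  assumes [measurable]: "f \<in> borel_measurable borel"
  shows "(\<integral>\<^sup>+w. f (z + w) \<partial>lborel) = (\<integral>\<^sup>+w. f w \<partial>lborel)"
proof -
  have "(\<integral>\<^sup>+w. f w \<partial>lborel) = (\<integral>\<^sup>+w. f w \<partial>distr lborel borel (\<lambda>x. z + x))"
    by (simp add: distr_translate)
  also have "\<dots> = (\<integral>\<^sup>+w. f (z + w) \<partial>lborel)" by (rule nn_integral_distr) auto
  finally show ?thesis ..
qed

lemma submean_weighted:
  assumes h: "integrable lborel h" and Fm: "stft h \<in> borel_measurable lborel" and r: "r \<ge> 0"
  shows "ennreal (2 * (1 - exp (- pi * r\<^sup>2 / 2)) * cmod (stft h z0))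
     \<le> (\<integral>\<^sup>+w. indicator (cball z0 r) w * ennreal (cmod (stft h w)) \<partial>lborel)"
proof -
  obtain x0 w0 where z0: "z0 = (x0, w0)" by (cases z0)
  define \<Phi> where "\<Phi> w = cmod (\<integral>t. mfun h x0 w0 t * Efun x0 t w \<partial>lborel)" for w
  have hm: "h \<in> borel_measurable lborel" using h by auto
  have \<Phi>m: "\<Phi> \<in> borel_measurable borel"
    unfolding \<Phi>_def using Psi_meas[OF hm, of x0 w0] by simp
  have "ennreal (2 * (1 - exp (- pi * r\<^sup>2 / 2)) * cmod (stft h z0))
      \<le> (\<integral>\<^sup>+w. indicator (cball 0 r) w * ennreal (exp (- pi * (norm w)\<^sup>2 / 2) * \<Phi> w) \<partial>lborel)"
  proof (rule layer_cake[OF \<Phi>m _ r])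
    show "\<And>w. 0 \<le> \<Phi> w" by (simp add: \<Phi>_def)
    fix s :: real assume "0 \<le> s" "s \<le> r"
    then show "ennreal (pi * s\<^sup>2 * cmod (stft h z0)) \<le> (\<integral>\<^sup>+w. indicator (cball 0 s) w * ennreal (\<Phi> w) \<partial>lborel)"
      unfolding \<Phi>_def z0 by (intro submean_disc h) 
  qed simp
  also have "\<dots> = (\<integral>\<^sup>+w. indicator (cball 0 r) w * ennreal (cmod (stft h (z0 + w))) \<partial>lborel)"
  proof (rule nn_integral_cong)
    fix w :: "real \<times> real"
    obtain a b where w: "w = (a, b)" by (cases w)
    have "cmod (stft h (z0 + w)) = exp (- pi * (a\<^sup>2 + b\<^sup>2) / 2) * \<Phi> w"
      unfolding z0 w \<Phi>_def using stft_shift[of h x0 a w0 b]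
      by (simp add: norm_mult norm_Ufun)
    moreover have "(norm w)\<^sup>2 = a\<^sup>2 + b\<^sup>2" by (simp add: w norm_Pair)
    ultimately show "indicator (cball 0 r) w * ennreal (exp (- pi * (norm w)\<^sup>2 / 2) * \<Phi> w)
        = indicator (cball 0 r) w * ennreal (cmod (stft h (z0 + w)))" by simp
  qed
  also have "\<dots> = (\<integral>\<^sup>+w. indicator (cball z0 r) (z0 + w) * ennreal (cmod (stft h (z0 + w))) \<partial>lborel)"
    by (intro nn_integral_cong) (simp add: indicator_def dist_norm)
  also have "\<dots> = (\<integral>\<^sup>+w. indicator (cball z0 r) w * ennreal (cmod (stft h w)) \<partial>lborel)"
    by (rule nn_translate[where f="\<lambda>w. indicator (cball z0 r) w * ennreal (cmod (stft h w))"])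
       (use Fm in simp)
  finally show ?thesis .
qed



lemma rho_bound:
  assumes D: "D \<in> sets borel" and R: "R > 0"
  shows "measure lborel (D \<inter> cball z (1/R)) \<le> nyq_rho D R"
proof -
  have bdd: "bdd_above (range (\<lambda>z. measure lborel (D \<inter> cball z (1 / R))))"
  proof (rule bdd_aboveI2)
    fix z :: "real \<times> real"
    have fin: "emeasure lborel (cball z (1/R)) < \<infinity>" by (intro emeasure_bounded_finite) simp
    have "measure lborel (D \<inter> cball z (1 / R)) \<le> measure lborel (cball z (1/R))"
      using D fin by (intro measure_mono_fmeasurable) (auto simp: fmeasurable_def)
    also have "\<dots> = pi * (1/R)\<^sup>2" using R by (intro measure_cball2) simp
    finally show "measure lborel (D \<inter> cball z (1 / R)) \<le> pi * (1/R)\<^sup>2" .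
  qed
  show ?thesis unfolding nyq_rho_def by (rule cSUP_upper[OF _ bdd]) simp
qed

lemma L1norm_nn:
  assumes "integrable lborel F"
  shows "ennreal (L1norm F) = (\<integral>\<^sup>+z. ennreal (cmod (F z)) \<partial>lborel)"
  unfolding L1norm_def using assms by (subst nn_integral_eq_integral) auto

lemma L1norm_nonneg: "L1norm F \<ge> 0"
  unfolding L1norm_def by simp

lemma conc_bound:
  assumes h: "integrable lborel h" and Fi: "integrable lborel (stft h)"
    and D: "D \<in> sets borel" and R: "R > 0"
  shows "2 * (1 - exp (- pi * (1/R)\<^sup>2 / 2)) * L1norm (\<lambda>z. indicator D z * stft h z)
      \<le> nyq_rho D R * L1norm (stft h)"
proof -
  define r where "r = 1 / R"
  define K where "K = 2 * (1 - exp (- pi * r\<^sup>2 / 2))"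
  define F where "F = stft h"
  define \<rho> where "\<rho> = nyq_rho D R"
  have r: "r \<ge> 0" using R by (simp add: r_def)
  have K: "K \<ge> 0" unfolding K_def by simp
  have Fm: "F \<in> borel_measurable lborel" using Fi by (auto simp: F_def)
  have [measurable]: "F \<in> borel_measurable borel" using Fm by simp
  have [measurable]: "D \<in> sets borel" using D .
  have \<rho>0: "\<rho> \<ge> 0"
    using rho_bound[OF D R, of 0] unfolding \<rho>_def by (rule order_trans[rotated]) simp
  have PFi: "integrable lborel (\<lambda>z. indicator D z * F z)"
  proof -
    have "(\<lambda>z. indicator D z * F z) = (\<lambda>z. indicator D z *\<^sub>R F z)" by (auto simp: indicator_def fun_eq_iff)
    then show ?thesis using Fi D unfolding F_def by (simp add: integrable_mult_indicator)
  qed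
  have "ennreal (K * L1norm (\<lambda>z. indicator D z * F z))
      = (\<integral>\<^sup>+z. indicator D z * ennreal (K * cmod (F z)) \<partial>lborel)"
  proof -
    have "ennreal (K * L1norm (\<lambda>z. indicator D z * F z)) = ennreal K * (\<integral>\<^sup>+z. ennreal (cmod (indicator D z * F z)) \<partial>lborel)"
      using K L1norm_nonneg by (simp add: ennreal_mult L1norm_nn[OF PFi])
    also have "\<dots> = (\<integral>\<^sup>+z. ennreal K * ennreal (cmod (indicator D z * F z)) \<partial>lborel)"
      by (rule nn_integral_cmult[symmetric]) measurable
    also have "\<dots> = (\<integral>\<^sup>+z. indicator D z * ennreal (K * cmod (F z)) \<partial>lborel)"
      using K by (intro nn_integral_cong) (simp add: indicator_def ennreal_mult norm_mult)
    finally show ?thesis .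
  qed
  also have "\<dots> \<le> (\<integral>\<^sup>+z. indicator D z * (\<integral>\<^sup>+w. indicator (cball z r) w * ennreal (cmod (F w)) \<partial>lborel) \<partial>lborel)"
  proof (intro nn_integral_mono mult_left_mono)
    fix z
    show "ennreal (K * cmod (F z)) \<le> (\<integral>\<^sup>+w. indicator (cball z r) w * ennreal (cmod (F w)) \<partial>lborel)"
      unfolding K_def F_def by (intro submean_weighted h r) (use Fm F_def in simp)
  qed simp
  also have "\<dots> = (\<integral>\<^sup>+z. (\<integral>\<^sup>+w. indicator D z * indicator (cball w r) z * ennreal (cmod (F w)) \<partial>lborel) \<partial>lborel)"
  proof (intro nn_integral_cong)
    fix z :: "real \<times> real"
    have "indicator D z * (\<integral>\<^sup>+w. indicator (cball z r) w * ennreal (cmod (F w)) \<partial>lborel)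
        = (\<integral>\<^sup>+w. indicator D z * (indicator (cball z r) w * ennreal (cmod (F w))) \<partial>lborel)"
      by (rule nn_integral_cmult[symmetric]) measurable
    also have "\<dots> = (\<integral>\<^sup>+w. indicator D z * indicator (cball w r) z * ennreal (cmod (F w)) \<partial>lborel)"
      by (intro nn_integral_cong) (simp add: indicator_def dist_commute mult_ac)
    finally show "indicator D z * (\<integral>\<^sup>+w. indicator (cball z r) w * ennreal (cmod (F w)) \<partial>lborel)
        = (\<integral>\<^sup>+w. indicator D z * indicator (cball w r) z * ennreal (cmod (F w)) \<partial>lborel)" .
  qed
  also have "\<dots> = (\<integral>\<^sup>+w. (\<integral>\<^sup>+z. indicator D z * indicator (cball w r) z * ennreal (cmod (F w)) \<partial>lborel) \<partial>lborel)"
  proof (rule lborel_pair.Fubini')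
    have c: "closed {p :: (real \<times> real) \<times> (real \<times> real). dist (fst p) (snd p) \<le> r}"
      by (intro closed_Collect_le continuous_intros)
    have [measurable]: "{p :: (real \<times> real) \<times> (real \<times> real). dist (fst p) (snd p) \<le> r} \<in> sets borel"
      using c by simp
    have "(\<lambda>p :: (real \<times> real) \<times> (real \<times> real). indicator D (snd p) * indicator {p. dist (fst p) (snd p) \<le> r} p * ennreal (cmod (F (fst p))))
        \<in> borel_measurable (lborel \<Otimes>\<^sub>M lborel)"
      by (rule meas_pair_lborel) measurable
    then show "(\<lambda>(w, z). indicator D z * indicator (cball w r) z * ennreal (cmod (F w))) \<in> borel_measurable (lborel \<Otimes>\<^sub>M lborel)"
      by (rule measurable_cong[THEN iffD1, rotated]) (auto simp: indicator_def)
  qed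
  also have "\<dots> = (\<integral>\<^sup>+w. emeasure lborel (D \<inter> cball w r) * ennreal (cmod (F w)) \<partial>lborel)"
  proof (intro nn_integral_cong)
    fix w :: "real \<times> real"
    have "(\<integral>\<^sup>+z. indicator D z * indicator (cball w r) z * ennreal (cmod (F w)) \<partial>lborel)
        = (\<integral>\<^sup>+z. indicator (D \<inter> cball w r) z \<partial>lborel) * ennreal (cmod (F w))"
      by (subst nn_integral_multc[symmetric]) (auto intro!: nn_integral_cong simp: indicator_def)
    then show "(\<integral>\<^sup>+z. indicator D z * indicator (cball w r) z * ennreal (cmod (F w)) \<partial>lborel)
        = emeasure lborel (D \<inter> cball w r) * ennreal (cmod (F w))" by simp
  qed
  also have "\<dots> \<le> (\<integral>\<^sup>+w. ennreal \<rho> * ennreal (cmod (F w)) \<partial>lborel)"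
  proof (intro nn_integral_mono mult_right_mono)
    fix w :: "real \<times> real"
    have fin: "emeasure lborel (D \<inter> cball w r) < \<infinity>"
      by (intro emeasure_bounded_finite) (auto intro: bounded_subset[OF bounded_cball])
    have "emeasure lborel (D \<inter> cball w r) = ennreal (measure lborel (D \<inter> cball w r))"
      using fin by (intro emeasure_eq_ennreal_measure) auto
    also have "\<dots> \<le> ennreal \<rho>"
      unfolding \<rho>_def r_def by (intro ennreal_leI rho_bound D R)
    finally show "emeasure lborel (D \<inter> cball w r) \<le> ennreal \<rho>" .
  qed simp
  also have "\<dots> = ennreal \<rho> * ennreal (L1norm F)"
    by (subst nn_integral_cmult) (auto simp: L1norm_nn[OF Fi[folded F_def]])
  also have "\<dots> = ennreal (\<rho> * L1norm F)" using \<rho>0 L1norm_nonneg by (simp add: ennreal_mult)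
  finally have "ennreal (K * L1norm (\<lambda>z. indicator D z * F z)) \<le> ennreal (\<rho> * L1norm F)" .
  then have "K * L1norm (\<lambda>z. indicator D z * F z) \<le> \<rho> * L1norm F"
    using \<rho>0 L1norm_nonneg by (subst (asm) ennreal_le_iff) auto
  then show ?thesis unfolding K_def r_def F_def \<rho>_def .
qed



lemma iexp_meas[measurable]: "(\<lambda>t. iexp (\<theta> * t)) \<in> borel_measurable borel"
  by (rule cont_meas) (intro continuous_intros)

lemma div2i_aux: "(X::complex) = (2 * \<i>) * Y \<Longrightarrow> Y = X / (2 * \<i>)"
  by simp

lemma cnj_meas[measurable (raw)]: "f \<in> borel_measurable M \<Longrightarrow> (\<lambda>x. cnj (f x)) \<in> borel_measurable M"
  by (rule measurable_compose[OF _ cont_meas]) (auto intro: continuous_intros)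

lemma ft_uniq_pos:
  fixes p q :: "real \<Rightarrow> real"
  assumes p: "integrable lborel p" and q: "integrable lborel q"
    and p0: "\<And>t. p t \<ge> 0" and q0: "\<And>t. q t \<ge> 0"
    and eq: "\<And>\<theta>. (\<integral>t. p t *\<^sub>R iexp (\<theta> * t) \<partial>lborel) = (\<integral>t. q t *\<^sub>R iexp (\<theta> * t) \<partial>lborel)"
  shows "AE t in lborel. p t = q t"
proof -
  have [measurable]: "p \<in> borel_measurable borel" "q \<in> borel_measurable borel" using p q by auto
  have "(\<integral>t. p t *\<^sub>R iexp (0 * t) \<partial>lborel) = (\<integral>t. q t *\<^sub>R iexp (0 * t) \<partial>lborel)" by (rule eq)
  then have "complex_of_real (\<integral>t. p t \<partial>lborel) = complex_of_real (\<integral>t. q t \<partial>lborel)"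
    by (simp add: scaleR_conv_of_real)
  then have cpq: "(\<integral>t. p t \<partial>lborel) = (\<integral>t. q t \<partial>lborel)" by simp
  define c where "c = (\<integral>t. p t \<partial>lborel)"
  have c0: "c \<ge> 0" unfolding c_def using p0 by simp
  show ?thesis
  proof (cases "c = 0")
    case True
    have "AE t in lborel. p t = 0"
      using True p p0 unfolding c_def by (subst (asm) integral_nonneg_eq_0_iff_AE) auto
    moreover have "AE t in lborel. q t = 0"
    proof -
      have "(\<integral>t. q t \<partial>lborel) = 0" using True cpq unfolding c_def by simp
      then show ?thesis using q q0 by (subst (asm) integral_nonneg_eq_0_iff_AE) auto
    qed
    ultimately show ?thesis by eventually_elim simp
  next
    case False
    with c0 have cpos: "c > 0" by simp
    define M1 where "M1 = density lborel (\<lambda>t. ennreal (p t / c))"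
    define M2 where "M2 = density lborel (\<lambda>t. ennreal (q t / c))"
    have dist: "real_distribution (density lborel (\<lambda>t. ennreal (f t / c)))"
      if f: "integrable lborel f" "\<And>t. f t \<ge> 0" "(\<integral>t. f t \<partial>lborel) = c" for f
    proof -
      have [measurable]: "f \<in> borel_measurable borel" using f by auto
      have "emeasure (density lborel (\<lambda>t. ennreal (f t / c))) UNIV = (\<integral>\<^sup>+t. ennreal (f t / c) \<partial>lborel)"
        by (subst emeasure_density) auto
      also have "\<dots> = ennreal (\<integral>t. f t / c \<partial>lborel)"
        using f cpos by (intro nn_integral_eq_integral) auto
      also have "\<dots> = 1" using f cpos by simp
      finally have "emeasure (density lborel (\<lambda>t. ennreal (f t / c))) UNIV = 1" .
      then show ?thesis
        by (auto simp: real_distribution_def real_distribution_axioms_def intro!: prob_spaceI)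
    qed
    have d1: "real_distribution M1" unfolding M1_def by (rule dist[OF p p0]) (simp add: c_def)
    have d2: "real_distribution M2" unfolding M2_def by (rule dist[OF q q0]) (simp add: c_def cpq)
    have ch: "char M1 \<theta> = (\<integral>t. (p t / c) *\<^sub>R iexp (\<theta> * t) \<partial>lborel)"
         "char M2 \<theta> = (\<integral>t. (q t / c) *\<^sub>R iexp (\<theta> * t) \<partial>lborel)" for \<theta>
      unfolding char_def M1_def M2_def using p0 q0 cpos
      by (subst integral_density; simp)+
    have "char M1 = char M2"
    proof
      fix \<theta>
      have "char M1 \<theta> = (\<integral>t. p t *\<^sub>R iexp (\<theta> * t) \<partial>lborel) / c"
        unfolding ch by (simp add: scaleR_conv_of_real divide_inverse mult_ac)
      also have "\<dots> = (\<integral>t. q t *\<^sub>R iexp (\<theta> * t) \<partial>lborel) / c" using eq[of \<theta>] by simp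
      also have "\<dots> = char M2 \<theta>"
        unfolding ch by (simp add: scaleR_conv_of_real divide_inverse mult_ac)
      finally show "char M1 \<theta> = char M2 \<theta>" .
    qed
    then have "M1 = M2" using Levy_uniqueness[OF d1 d2] by simp
    then have "AE t in lborel. ennreal (p t / c) = ennreal (q t / c)"
      unfolding M1_def M2_def by (subst (asm) sigma_finite_measure.density_unique_iff[OF sigma_finite_lborel]) auto
    then show ?thesis
    proof eventually_elim
      fix t assume "ennreal (p t / c) = ennreal (q t / c)"
      then have "p t / c = q t / c" using p0[of t] q0[of t] cpos by (subst (asm) ennreal_inj) auto
      then show "p t = q t" using cpos by simp
    qed
  qed
qed

lemma ft_uniq_real:
  fixes k :: "real \<Rightarrow> real"
  assumes k: "integrable lborel k"
    and z: "\<And>\<theta>. (\<integral>t. k t *\<^sub>R iexp (\<theta> * t) \<partial>lborel) = 0"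
  shows "AE t in lborel. k t = 0"
proof -
  define p where "p t = max (k t) 0" for t
  define q where "q t = max (- k t) 0" for t
  have pi: "integrable lborel p" unfolding p_def using k by auto
  have qi: "integrable lborel q" unfolding q_def using k by auto
  have kpq: "k t = p t - q t" for t unfolding p_def q_def by auto
  have "AE t in lborel. p t = q t"
  proof (rule ft_uniq_pos[OF pi qi])
    show "\<And>t. 0 \<le> p t" "\<And>t. 0 \<le> q t" by (auto simp: p_def q_def)
    fix \<theta>
    have ip: "integrable lborel (\<lambda>t. p t *\<^sub>R iexp (\<theta> * t))"
      by (rule Bochner_Integration.integrable_bound[OF pi]) (use pi in \<open>auto simp: norm_mult\<close>)
    have iq: "integrable lborel (\<lambda>t. q t *\<^sub>R iexp (\<theta> * t))"
      by (rule Bochner_Integration.integrable_bound[OF qi]) (use qi in \<open>auto simp: norm_mult\<close>)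
    have "0 = (\<integral>t. k t *\<^sub>R iexp (\<theta> * t) \<partial>lborel)" using z[of \<theta>] by simp
    also have "\<dots> = (\<integral>t. p t *\<^sub>R iexp (\<theta> * t) - q t *\<^sub>R iexp (\<theta> * t) \<partial>lborel)"
      by (simp add: kpq scaleR_diff_left)
    also have "\<dots> = (\<integral>t. p t *\<^sub>R iexp (\<theta> * t) \<partial>lborel) - (\<integral>t. q t *\<^sub>R iexp (\<theta> * t) \<partial>lborel)"
      using ip iq by simp
    finally show "(\<integral>t. p t *\<^sub>R iexp (\<theta> * t) \<partial>lborel) = (\<integral>t. q t *\<^sub>R iexp (\<theta> * t) \<partial>lborel)" by simp
  qed
  then show ?thesis by eventually_elim (simp add: kpq)
qed

lemma ft_uniq:
  fixes k :: "real \<Rightarrow> complex"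
  assumes k: "integrable lborel k"
    and z: "\<And>\<theta>. (\<integral>t. k t * iexp (\<theta> * t) \<partial>lborel) = 0"
  shows "AE t in lborel. k t = 0"
proof -
  have [measurable]: "k \<in> borel_measurable borel" using k by auto
  have ik: "integrable lborel (\<lambda>t. k t * iexp (\<theta> * t))" for \<theta>
    by (rule Bochner_Integration.integrable_bound[OF k]) (use k in \<open>auto simp: norm_mult\<close>)
  have ikc: "integrable lborel (\<lambda>t. cnj (k t) * iexp (\<theta> * t))" for \<theta>
    by (rule Bochner_Integration.integrable_bound[OF k]) (use k in \<open>auto simp: norm_mult\<close>)
  have zc: "(\<integral>t. cnj (k t) * iexp (\<theta> * t) \<partial>lborel) = 0" for \<theta>
  proof -
    have "(\<integral>t. cnj (k t) * iexp (\<theta> * t) \<partial>lborel) = (\<integral>t. cnj (k t * iexp (- \<theta> * t)) \<partial>lborel)"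
      by (intro Bochner_Integration.integral_cong) (auto simp: exp_cnj)
    also have "\<dots> = cnj (\<integral>t. k t * iexp (- \<theta> * t) \<partial>lborel)" by (rule Bochner_Integration.integral_cnj)
    also have "\<dots> = 0" using z[of "- \<theta>"] by simp
    finally show ?thesis .
  qed
  have re: "AE t in lborel. Re (k t) = 0"
  proof (rule ft_uniq_real)
    show "integrable lborel (\<lambda>t. Re (k t))" using k by (rule integrable_Re)
    fix \<theta>
    have "(\<integral>t. Re (k t) *\<^sub>R iexp (\<theta> * t) \<partial>lborel)
        = (\<integral>t. (k t * iexp (\<theta> * t) + cnj (k t) * iexp (\<theta> * t)) / 2 \<partial>lborel)"
    proof (intro Bochner_Integration.integral_cong refl)
      fix t
      have "k t * iexp (\<theta> * t) + cnj (k t) * iexp (\<theta> * t) = (k t + cnj (k t)) * iexp (\<theta> * t)"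
        by (simp only: distrib_right)
      also have "k t + cnj (k t) = complex_of_real (2 * Re (k t))" by (rule complex_add_cnj)
      finally show "Re (k t) *\<^sub>R iexp (\<theta> * t) = (k t * iexp (\<theta> * t) + cnj (k t) * iexp (\<theta> * t)) / 2"
        by (simp add: scaleR_conv_of_real)
    qed
    also have "\<dots> = ((\<integral>t. k t * iexp (\<theta> * t) \<partial>lborel) + (\<integral>t. cnj (k t) * iexp (\<theta> * t) \<partial>lborel)) / 2"
      using ik ikc by simp
    also have "\<dots> = 0" using z[of \<theta>] zc[of \<theta>] by simp
    finally show "(\<integral>t. Re (k t) *\<^sub>R iexp (\<theta> * t) \<partial>lborel) = 0" .
  qed
  have im: "AE t in lborel. Im (k t) = 0"
  proof (rule ft_uniq_real)
    show "integrable lborel (\<lambda>t. Im (k t))" using k by (rule integrable_Im)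
    fix \<theta>
    have "(\<integral>t. Im (k t) *\<^sub>R iexp (\<theta> * t) \<partial>lborel)
        = (\<integral>t. (k t * iexp (\<theta> * t) - cnj (k t) * iexp (\<theta> * t)) / (2 * \<i>) \<partial>lborel)"
    proof (intro Bochner_Integration.integral_cong refl)
      fix t
      have "k t * iexp (\<theta> * t) - cnj (k t) * iexp (\<theta> * t) = (k t - cnj (k t)) * iexp (\<theta> * t)"
        by (simp only: left_diff_distrib)
      also have "k t - cnj (k t) = complex_of_real (2 * Im (k t)) * \<i>" by (rule complex_diff_cnj)
      finally have "k t * iexp (\<theta> * t) - cnj (k t) * iexp (\<theta> * t) = (2 * \<i>) * (Im (k t) *\<^sub>R iexp (\<theta> * t))"
        by (simp add: scaleR_conv_of_real mult_ac)
      then show "Im (k t) *\<^sub>R iexp (\<theta> * t) = (k t * iexp (\<theta> * t) - cnj (k t) * iexp (\<theta> * t)) / (2 * \<i>)"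
        by (rule div2i_aux)
    qed
    also have "\<dots> = ((\<integral>t. k t * iexp (\<theta> * t) \<partial>lborel) - (\<integral>t. cnj (k t) * iexp (\<theta> * t) \<partial>lborel)) / (2 * \<i>)"
      using ik ikc by simp
    also have "\<dots> = 0" using z[of \<theta>] zc[of \<theta>] by simp
    finally show "(\<integral>t. Im (k t) *\<^sub>R iexp (\<theta> * t) \<partial>lborel) = 0" .
  qed
  from re im show ?thesis by eventually_elim (simp add: complex_eq_iff)
qed

lemma stft_inj:
  assumes h: "integrable lborel h" and z: "\<And>w. stft h (0, w) = 0"
  shows "AE t in lborel. h t = 0"
proof -
  define k where "k t = h t * complex_of_real (gwin t)" for t
  have gb: "\<bar>gwin t\<bar> \<le> 2 powr (1/4)" for t
    unfolding gwin_def by (simp add: abs_mult)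
  have ki: "integrable lborel k"
  proof (rule Bochner_Integration.integrable_bound)
    show "integrable lborel (\<lambda>t. 2 powr (1/4) * cmod (h t))" using h by auto
    have [measurable]: "h \<in> borel_measurable borel" using h by auto
    have "(\<lambda>t. complex_of_real (gwin t)) \<in> borel_measurable borel"
      unfolding gwin_def by (rule cont_meas) (intro continuous_intros)
    then show "k \<in> borel_measurable lborel" unfolding k_def by simp
    show "AE t in lborel. norm (k t) \<le> norm (2 powr (1/4) * cmod (h t))"
      using gb by (auto simp: k_def norm_mult intro!: AE_I2) (metis gb mult.commute mult_right_mono norm_ge_zero)
  qed
  have "AE t in lborel. k t = 0"
  proof (rule ft_uniq[OF ki])
    fix \<theta> :: real
    have "stft h (0, - \<theta> / (2 * pi)) = 0" by (rule z)
    moreover have "stft h (0, - \<theta> / (2 * pi)) = (\<integral>t. k t * iexp (\<theta> * t) \<partial>lborel)"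
    proof -
      have e: "- 2 * complex_of_real pi * \<i> * complex_of_real (- \<theta> / (2 * pi)) * complex_of_real t
          = \<i> * complex_of_real (\<theta> * t)" for t
        by (simp add: field_simps)
      show ?thesis unfolding stft_def k_def prod.case e by simp
    qed
    ultimately show "(\<integral>t. k t * iexp (\<theta> * t) \<partial>lborel) = 0" by simp
  qed
  then show ?thesis by eventually_elim (simp add: k_def gwin_def)
qed



lemma gauss_char: "(\<integral>y. std_normal_density y *\<^sub>R iexp (\<theta> * y) \<partial>lborel) = complex_of_real (exp (- \<theta>\<^sup>2 / 2))"
proof -
  have "char std_normal_distribution \<theta> = complex_of_real (exp (- (\<theta>^2) / 2))"
    by (simp add: char_std_normal_distribution)
  moreover have "char std_normal_distribution \<theta> = (\<integral>y. std_normal_density y *\<^sub>R iexp (\<theta> * y) \<partial>lborel)"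
    unfolding char_def by (subst integral_density) (auto intro!: cont_meas continuous_intros)
  ultimately show ?thesis by simp
qed

lemma gwin_sq:
  "gwin t * gwin (t - x) = sqrt 2 * exp (- pi * x\<^sup>2 / 2) * exp (- 2 * pi * (t - x / 2)\<^sup>2)"
proof -
  have "2 powr (1/4) * 2 powr (1/4) = (2::real) powr (1/2)" by (simp add: powr_add[symmetric])
  also have "\<dots> = sqrt 2" by (simp add: powr_half_sqrt)
  finally have s: "2 powr (1/4) * 2 powr (1/4) = sqrt (2::real)" .
  have e: "- pi * t\<^sup>2 + - pi * (t - x)\<^sup>2 = - pi * x\<^sup>2 / 2 + - 2 * pi * (t - x / 2)\<^sup>2"
    by (simp add: power2_eq_square algebra_simps)
  have "gwin t * gwin (t - x) = (2 powr (1/4) * 2 powr (1/4)) * exp (- pi * t\<^sup>2 + - pi * (t - x)\<^sup>2)"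
    unfolding gwin_def exp_add by (simp only: mult_ac)
  also have "\<dots> = sqrt 2 * exp (- pi * x\<^sup>2 / 2) * exp (- 2 * pi * (t - x / 2)\<^sup>2)"
    unfolding s e exp_add by (simp only: mult_ac)
  finally show ?thesis .
qed

lemma stft_gauss:
  "stft (\<lambda>t. complex_of_real (gwin t)) (x, \<omega>)
     = complex_of_real (exp (- pi * (x\<^sup>2 + \<omega>\<^sup>2) / 2)) * exp (- \<i> * complex_of_real (pi * \<omega> * x))"
proof -
  define c where "c = 1 / (2 * sqrt pi)"
  define \<theta> where "\<theta> = - 2 * pi * \<omega> * c"
  define f where "f t = complex_of_real (gwin t) * cnj (complex_of_real (gwin (t - x))) *
      exp (- 2 * complex_of_real pi * \<i> * complex_of_real \<omega> * complex_of_real t)" for t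
  define B where "B = complex_of_real (sqrt 2 * sqrt (2 * pi) * exp (- pi * x\<^sup>2 / 2)) * exp (- \<i> * complex_of_real (pi * \<omega> * x))"
  have c0: "c \<noteq> 0" "c > 0" unfolding c_def by auto
  have cc: "c\<^sup>2 = 1 / (4 * pi)" unfolding c_def by (simp add: power2_eq_square)
  have pt: "f (x / 2 + c * y) = B * (std_normal_density y *\<^sub>R iexp (\<theta> * y))" for y
  proof -
    have g: "gwin (x / 2 + c * y) * gwin (x / 2 + c * y - x) = sqrt 2 * exp (- pi * x\<^sup>2 / 2) * exp (- y\<^sup>2 / 2)"
    proof -
      have "- 2 * pi * (x / 2 + c * y - x / 2)\<^sup>2 = - 2 * pi * c\<^sup>2 * y\<^sup>2" by (simp add: power2_eq_square)
      also have "\<dots> = - y\<^sup>2 / 2" unfolding cc by simp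
      finally have ee: "- 2 * pi * (x / 2 + c * y - x / 2)\<^sup>2 = - y\<^sup>2 / 2" .
      show ?thesis using gwin_sq[of "x / 2 + c * y" x] unfolding ee .
    qed
    have e: "- 2 * complex_of_real pi * \<i> * complex_of_real \<omega> * complex_of_real (x / 2 + c * y)
        = - \<i> * complex_of_real (pi * \<omega> * x) + \<i> * complex_of_real (\<theta> * y)"
      unfolding \<theta>_def by (simp add: algebra_simps)
    have sq: "sqrt 2 * sqrt (2 * pi) * (1 / sqrt (2 * pi)) = sqrt 2" by simp
    have "f (x / 2 + c * y) = complex_of_real (gwin (x / 2 + c * y) * gwin (x / 2 + c * y - x)) *
        exp (- 2 * complex_of_real pi * \<i> * complex_of_real \<omega> * complex_of_real (x / 2 + c * y))"
      unfolding f_def by simp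
    also have "\<dots> = complex_of_real (sqrt 2 * exp (- pi * x\<^sup>2 / 2) * exp (- y\<^sup>2 / 2)) *
        (exp (- \<i> * complex_of_real (pi * \<omega> * x)) * exp (\<i> * complex_of_real (\<theta> * y)))"
      unfolding g e exp_add ..
    also have "\<dots> = complex_of_real (sqrt 2 * sqrt (2 * pi) * (1 / sqrt (2 * pi)) * (exp (- pi * x\<^sup>2 / 2) * exp (- y\<^sup>2 / 2))) *
        (exp (- \<i> * complex_of_real (pi * \<omega> * x)) * exp (\<i> * complex_of_real (\<theta> * y)))"
      unfolding sq by (simp only: mult_ac)
    also have "\<dots> = B * (std_normal_density y *\<^sub>R iexp (\<theta> * y))"
      unfolding B_def std_normal_density_def scaleR_conv_of_real of_real_mult
      by (simp only: mult_ac)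
    finally show ?thesis .
  qed
  have "stft (\<lambda>t. complex_of_real (gwin t)) (x, \<omega>) = (\<integral>t. f t \<partial>lborel)"
    unfolding stft_def f_def by simp
  also have "\<dots> = \<bar>c\<bar> *\<^sub>R (\<integral>y. f (x / 2 + c * y) \<partial>lborel)"
    by (rule lborel_integral_real_affine[OF c0(1)])
  also have "\<dots> = \<bar>c\<bar> *\<^sub>R (B * complex_of_real (exp (- \<theta>\<^sup>2 / 2)))"
    unfolding pt integral_mult_right_zero gauss_char ..
  also have "\<dots> = complex_of_real (exp (- pi * (x\<^sup>2 + \<omega>\<^sup>2) / 2)) * exp (- \<i> * complex_of_real (pi * \<omega> * x))"
  proof -
    have t2: "- \<theta>\<^sup>2 / 2 = - pi * \<omega>\<^sup>2 / 2" unfolding \<theta>_def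
      using cc by (simp add: power2_eq_square field_simps)
    have k: "c * (sqrt 2 * sqrt (2 * pi)) = 1"
    proof -
      have "sqrt 2 * sqrt (2 * pi) = sqrt 2 * sqrt 2 * sqrt pi"
        by (simp add: real_sqrt_mult)
      also have "\<dots> = 2 * sqrt pi" by simp
      finally have "sqrt 2 * sqrt (2 * pi) = 2 * sqrt pi" .
      then show ?thesis unfolding c_def by simp
    qed
    have "\<bar>c\<bar> *\<^sub>R (B * complex_of_real (exp (- \<theta>\<^sup>2 / 2)))
        = complex_of_real (c * (sqrt 2 * sqrt (2 * pi)) * (exp (- pi * x\<^sup>2 / 2) * exp (- pi * \<omega>\<^sup>2 / 2)))
          * exp (- \<i> * complex_of_real (pi * \<omega> * x))"
      unfolding B_def t2 using c0 by (simp add: scaleR_conv_of_real mult_ac)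
    also have "exp (- pi * x\<^sup>2 / 2) * exp (- pi * \<omega>\<^sup>2 / 2) = exp (- pi * (x\<^sup>2 + \<omega>\<^sup>2) / 2)"
      by (simp add: exp_add[symmetric] algebra_simps add_divide_distrib)
    finally show ?thesis unfolding k by simp
  qed
  finally show ?thesis .
qed



lemma gauss_integrable:
  assumes "a > 0"
  shows "integrable lborel (\<lambda>x::real. exp (- a * x\<^sup>2))"
proof -
  define \<sigma> where "\<sigma> = 1 / sqrt (2 * a)"
  have s0: "\<sigma> > 0" using assms by (simp add: \<sigma>_def)
  have ss: "\<sigma>\<^sup>2 = 1 / (2 * a)" using assms by (simp add: \<sigma>_def power_divide)
  have eq: "exp (- a * x\<^sup>2) = sqrt (2 * pi * \<sigma>\<^sup>2) * normal_density 0 \<sigma> x" for x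
  proof -
    have "- x\<^sup>2 / (2 * \<sigma>\<^sup>2) = - a * x\<^sup>2" using assms unfolding ss by (simp add: field_simps)
    moreover have "sqrt (2 * pi * \<sigma>\<^sup>2) > 0" using s0 by simp
    ultimately show ?thesis using s0 unfolding normal_density_def by simp
  qed
  show ?thesis unfolding eq using s0 by (intro integrable_mult_right integrable_normal_density) auto
qed

lemma gwin_integrable: "integrable lborel (\<lambda>t. complex_of_real (gwin t))"
proof -
  have "integrable lborel (\<lambda>t. gwin t)"
    unfolding gwin_def by (intro integrable_mult_right gauss_integrable) simp
  then show ?thesis by (rule integrable_of_real)
qed

lemma stft_gauss_integrable: "integrable lborel (stft (\<lambda>t. complex_of_real (gwin t)))"
proof -
  define g where "g x = exp (- (pi / 2) * x\<^sup>2)" for x :: real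
  have gi: "integrable lborel g" unfolding g_def by (rule gauss_integrable) simp
  have "integrable (lborel \<Otimes>\<^sub>M lborel) (\<lambda>p. g (fst p) * g (snd p))"
    by (rule integrable_prod_mult[OF gi gi])
  then have pi: "integrable lborel (\<lambda>p::real\<times>real. g (fst p) * g (snd p))"
    by (simp add: lborel_prod)
  show ?thesis
  proof (rule Bochner_Integration.integrable_bound[OF pi])
    have "stft (\<lambda>t. complex_of_real (gwin t)) = (\<lambda>p. complex_of_real (exp (- pi * ((fst p)\<^sup>2 + (snd p)\<^sup>2) / 2)) * exp (- \<i> * complex_of_real (pi * snd p * fst p)))"
      by (auto simp: fun_eq_iff stft_gauss)
    moreover have "(\<lambda>p::real\<times>real. complex_of_real (exp (- pi * ((fst p)\<^sup>2 + (snd p)\<^sup>2) / 2)) * exp (- \<i> * complex_of_real (pi * snd p * fst p))) \<in> borel_measurable borel"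
      by (rule cont_meas) (intro continuous_intros, auto)
    ultimately show "stft (\<lambda>t. complex_of_real (gwin t)) \<in> borel_measurable lborel" by simp
    show "AE x in lborel. norm (stft (\<lambda>t. complex_of_real (gwin t)) x) \<le> norm (g (fst x) * g (snd x))"
    proof (rule AE_I2)
      fix p :: "real \<times> real"
      obtain x w where p: "p = (x, w)" by (cases p)
      have "exp (- pi * (x\<^sup>2 + w\<^sup>2) / 2) = g x * g w"
        unfolding g_def by (simp add: exp_add[symmetric] algebra_simps add_divide_distrib) (simp add: field_simps)
      then show "norm (stft (\<lambda>t. complex_of_real (gwin t)) p) \<le> norm (g (fst p) * g (snd p))"
        unfolding p by (simp add: stft_gauss norm_mult)
    qed
  qed
qed

lemma gauss_in_M1: "(\<lambda>t. complex_of_real (gwin t)) \<in> M1"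
  unfolding M1_def using gwin_integrable stft_gauss_integrable by simp

lemma pos_L1_of_point:
  assumes h: "integrable lborel h" and Fi: "integrable lborel (stft h)"
  shows "2 * (1 - exp (- pi / 2)) * cmod (stft h z) \<le> L1norm (stft h)"
proof -
  have Fm: "stft h \<in> borel_measurable lborel" using Fi by auto
  have "ennreal (2 * (1 - exp (- pi * 1\<^sup>2 / 2)) * cmod (stft h z))
      \<le> (\<integral>\<^sup>+w. indicator (cball z 1) w * ennreal (cmod (stft h w)) \<partial>lborel)"
    by (rule submean_weighted[OF h Fm]) simp
  also have "\<dots> \<le> (\<integral>\<^sup>+w. ennreal (cmod (stft h w)) \<partial>lborel)"
    by (intro nn_integral_mono) (auto simp: indicator_def)
  also have "\<dots> = ennreal (L1norm (stft h))" by (rule L1norm_nn[OF Fi, symmetric])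
  finally show ?thesis using L1norm_nonneg by (simp add: ennreal_le_iff)
qed

lemma gauss_L1_ne0: "L1norm (stft (\<lambda>t. complex_of_real (gwin t))) \<noteq> 0"
proof
  assume "L1norm (stft (\<lambda>t. complex_of_real (gwin t))) = 0"
  then have le0: "2 * (1 - exp (- pi / 2)) * cmod (stft (\<lambda>t. complex_of_real (gwin t)) (0, 0)) \<le> 0"
    using pos_L1_of_point[OF gwin_integrable stft_gauss_integrable] by metis
  moreover have "2 * (1 - exp (- pi / 2)) > 0" by simp
  moreover have "cmod (stft (\<lambda>t. complex_of_real (gwin t)) (0, 0)) = 1" by (simp add: stft_gauss)
  ultimately have gt0: "2 * (1 - exp (- pi / 2)) * cmod (stft (\<lambda>t. complex_of_real (gwin t)) (0, 0)) > 0"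
    by simp
  show False using le0 gt0 by linarith
qed



lemma mfun_integrable:
  assumes h: "integrable lborel h"
  shows "integrable lborel (mfun h x w)"
proof (rule Bochner_Integration.integrable_bound)
  show "integrable lborel (\<lambda>t. 2 powr (1/4) * cmod (h t))" using h by auto
  show "mfun h x w \<in> borel_measurable lborel" using h by (intro mfun_meas) auto
  show "AE t in lborel. norm (mfun h x w t) \<le> norm (2 powr (1/4) * cmod (h t))"
  proof (rule AE_I2)
    fix t
    have "cmod (mfun h x w t) = cmod (h t) * 2 powr (1/4) * exp (- pi * (t - x)\<^sup>2)" by (rule norm_mfun)
    also have "\<dots> \<le> cmod (h t) * 2 powr (1/4) * 1" by (intro mult_left_mono) auto
    finally show "norm (mfun h x w t) \<le> norm (2 powr (1/4) * cmod (h t))" by (simp add: mult_ac)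
  qed
qed

lemma mfun_diff: "mfun (\<lambda>t. f t - g t) x w t = mfun f x w t - mfun g x w t"
  unfolding mfun_def by (simp add: algebra_simps)

lemma stft_diff:
  assumes f: "integrable lborel f" and g: "integrable lborel g"
  shows "stft (\<lambda>t. f t - g t) z = stft f z - stft g z"
proof -
  obtain x w where z: "z = (x, w)" by (cases z)
  show ?thesis unfolding z stft_base mfun_diff
    using mfun_integrable[OF f, of x w] mfun_integrable[OF g, of x w] by simp
qed

lemma L1_ineq:
  fixes N F :: "real \<times> real \<Rightarrow> complex"
  assumes Ni: "integrable lborel N" and Fi: "integrable lborel F"
  shows "L1norm N + L1norm F - 2 * L1norm (\<lambda>z. indicator {z. N z \<noteq> 0} z * F z) \<le> L1norm (\<lambda>z. N z + F z)"
proof -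
  define D where "D = {z. N z \<noteq> 0}"
  have [measurable]: "N \<in> borel_measurable borel" using Ni by auto
  have Dm[measurable]: "D \<in> sets borel" unfolding D_def by measurable
  have i1: "integrable lborel (\<lambda>z. indicator D z * cmod (F z))"
  proof -
    have "integrable lborel (\<lambda>z. indicator D z *\<^sub>R cmod (F z))"
      using Fi Dm by (intro integrable_mult_indicator integrable_norm) auto
    then show ?thesis by simp
  qed
  have "L1norm N + L1norm F - 2 * L1norm (\<lambda>z. indicator D z * F z)
      = (\<integral>z. cmod (N z) + cmod (F z) - 2 * (indicator D z * cmod (F z)) \<partial>lborel)"
  proof -
    have "L1norm (\<lambda>z. indicator D z * F z) = (\<integral>z. indicator D z * cmod (F z) \<partial>lborel)"
      unfolding L1norm_def by (intro Bochner_Integration.integral_cong) (auto simp: norm_mult indicator_def)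
    then show ?thesis unfolding L1norm_def using Ni Fi i1 by simp
  qed
  also have "\<dots> \<le> (\<integral>z. cmod (N z + F z) \<partial>lborel)"
  proof (rule integral_mono)
    show "integrable lborel (\<lambda>z. cmod (N z) + cmod (F z) - 2 * (indicator D z * cmod (F z)))"
      using Ni Fi i1 by auto
    show "integrable lborel (\<lambda>z. cmod (N z + F z))" using Ni Fi by auto
    fix z
    show "cmod (N z) + cmod (F z) - 2 * (indicator D z * cmod (F z)) \<le> cmod (N z + F z)"
    proof (cases "z \<in> D")
      case True
      then show ?thesis using norm_diff_ineq[of "N z" "F z"] by simp
    next
      case False
      then show ?thesis by (simp add: D_def)
    qed
  qed
  finally show ?thesis unfolding D_def L1norm_def .
qed

theorem corollary1:
  fixes f :: "real \<Rightarrow> complex" and N :: "real \<times> real \<Rightarrow> complex" and R :: real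
  assumes "f \<in> M1"
    and "integrable lborel N"
    and "R > 0"
    and "nyq_rho {z. N z \<noteq> 0} R < (1 - exp (- pi / R\<^sup>2)) / 2"
  shows "conc_delta {z. N z \<noteq> 0} < 1 / 2
    \<and> (\<forall>g \<in> M1. L1norm (\<lambda>z. (stft f z + N z) - stft f z)
                  \<le> L1norm (\<lambda>z. (stft f z + N z) - stft g z))
    \<and> (\<forall>g \<in> M1. (\<forall>h \<in> M1. L1norm (\<lambda>z. (stft f z + N z) - stft g z)
                              \<le> L1norm (\<lambda>z. (stft f z + N z) - stft h z))
                 \<longrightarrow> (AE t in lborel. g t = f t))"
proof -
  note fM = assms(1) and Ni = assms(2) and R = assms(3) and hyp = assms(4)
  define D where "D = {z. N z \<noteq> 0}"
  have fi: "integrable lborel f" and Vfi: "integrable lborel (stft f)" using fM by (auto simp: M1_def)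
  have [measurable]: "N \<in> borel_measurable borel" using Ni by auto
  have Dm: "D \<in> sets borel" unfolding D_def by measurable
  define a where "a = pi * (1/R)\<^sup>2 / 2"
  define e where "e = exp (- a)"
  define K where "K = 2 * (1 - e)"
  define \<rho> where "\<rho> = nyq_rho D R"
  define \<kappa> where "\<kappa> = \<rho> / K"
  have a0: "a > 0" unfolding a_def using R by simp
  have e1: "e < 1" "e > 0" unfolding e_def using a0 by auto
  have K0: "K > 0" unfolding K_def using e1 by simp
  have ee: "exp (- pi / R\<^sup>2) = e\<^sup>2"
  proof -
    have "- pi / R\<^sup>2 = - a + - a" unfolding a_def by (simp add: power_divide)
    then have "exp (- pi / R\<^sup>2) = exp (- a + - a)" by simp
    also have "\<dots> = exp (- a) * exp (- a)" by (rule exp_add)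
    finally show ?thesis unfolding e_def by (simp add: power2_eq_square)
  qed
  have \<kappa>: "\<kappa> < 1 / 2"
  proof -
    have "\<rho> < (1 - e) * (1 + e) / 2" using hyp unfolding \<rho>_def D_def ee by (simp add: power2_eq_square algebra_simps)
    then have "\<kappa> < (1 - e) * (1 + e) / 2 / K" unfolding \<kappa>_def using K0 by (rule divide_strict_right_mono)
    also have "\<dots> = (1 + e) / 4" unfolding K_def using e1 by (simp add: field_simps)
    also have "\<dots> < 1 / 2" using e1 by simp
    finally show ?thesis .
  qed
  have bound: "L1norm (\<lambda>z. indicator D z * stft h z) \<le> \<kappa> * L1norm (stft h)" if hM: "h \<in> M1" for h
  proof -
    have "integrable lborel h" "integrable lborel (stft h)" using hM by (auto simp: M1_def)
    from conc_bound[OF this Dm R]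
    have "K * L1norm (\<lambda>z. indicator D z * stft h z) \<le> \<rho> * L1norm (stft h)"
      unfolding K_def e_def a_def \<rho>_def by simp
    then show ?thesis unfolding \<kappa>_def using K0 by (simp add: field_simps)
  qed
  have part1: "conc_delta D < 1 / 2"
  proof -
    have "conc_delta D \<le> \<kappa>"
      unfolding conc_delta_def
    proof (rule cSUP_least)
      show "{f \<in> M1. L1norm (stft f) \<noteq> 0} \<noteq> {}" using gauss_in_M1 gauss_L1_ne0 by blast
      fix h assume "h \<in> {f \<in> M1. L1norm (stft f) \<noteq> 0}"
      then have hM: "h \<in> M1" and ne: "L1norm (stft h) \<noteq> 0" by auto
      have pos: "L1norm (stft h) > 0" using ne L1norm_nonneg[of "stft h"] by simp
      show "L1norm (\<lambda>z. indicator D z * stft h z) / L1norm (stft h) \<le> \<kappa>"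
        using bound[OF hM] pos by (simp add: divide_le_eq)
    qed
    then show ?thesis using \<kappa> by simp
  qed
  have key: "L1norm N + (1 - 2 * \<kappa>) * L1norm (stft (\<lambda>t. g t - f t))
      \<le> L1norm (\<lambda>z. (stft f z + N z) - stft g z)" if gM: "g \<in> M1" for g
  proof -
    have gi: "integrable lborel g" and Vgi: "integrable lborel (stft g)" using gM by (auto simp: M1_def)
    define h where "h t = f t - g t" for t
    have Vh: "stft h = (\<lambda>z. stft f z - stft g z)" unfolding h_def using stft_diff[OF fi gi] by auto
    have hM: "h \<in> M1" unfolding M1_def h_def using fi gi Vfi Vgi Vh[unfolded h_def] by simp
    have Vhi: "integrable lborel (stft h)" using hM by (simp add: M1_def)
    have sym: "L1norm (stft (\<lambda>t. g t - f t)) = L1norm (stft h)"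
    proof -
      have "stft (\<lambda>t. g t - f t) = (\<lambda>z. stft g z - stft f z)" using stft_diff[OF gi fi] by auto
      then show ?thesis unfolding Vh L1norm_def by (simp add: norm_minus_commute)
    qed
    have "L1norm N + L1norm (stft h) - 2 * L1norm (\<lambda>z. indicator D z * stft h z) \<le> L1norm (\<lambda>z. N z + stft h z)"
      unfolding D_def by (rule L1_ineq[OF Ni Vhi])
    moreover have "(\<lambda>z. N z + stft h z) = (\<lambda>z. (stft f z + N z) - stft g z)" unfolding Vh by auto
    ultimately show ?thesis using bound[OF hM] unfolding sym by (simp add: algebra_simps)
  qed
  have LN: "L1norm (\<lambda>z. (stft f z + N z) - stft f z) = L1norm N" by simp
  have nn: "0 \<le> (1 - 2 * \<kappa>) * L1norm (stft (\<lambda>t. g t - f t))" for g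
    using \<kappa> L1norm_nonneg by simp
  have part2: "\<forall>g \<in> M1. L1norm (\<lambda>z. (stft f z + N z) - stft f z) \<le> L1norm (\<lambda>z. (stft f z + N z) - stft g z)"
  proof
    fix g assume gM: "g \<in> M1"
    show "L1norm (\<lambda>z. (stft f z + N z) - stft f z) \<le> L1norm (\<lambda>z. (stft f z + N z) - stft g z)"
      using key[OF gM] nn[of g] unfolding LN by linarith
  qed
  have part3: "\<forall>g \<in> M1. (\<forall>h \<in> M1. L1norm (\<lambda>z. (stft f z + N z) - stft g z)
                              \<le> L1norm (\<lambda>z. (stft f z + N z) - stft h z))
                 \<longrightarrow> (AE t in lborel. g t = f t)"
  proof (intro ballI impI)
    fix g assume gM: "g \<in> M1" and min: "\<forall>h \<in> M1. L1norm (\<lambda>z. (stft f z + N z) - stft g z)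
                              \<le> L1norm (\<lambda>z. (stft f z + N z) - stft h z)"
    have gi: "integrable lborel g" and Vgi: "integrable lborel (stft g)" using gM by (auto simp: M1_def)
    define h where "h t = g t - f t" for t
    have Vh: "stft h = (\<lambda>z. stft g z - stft f z)" unfolding h_def using stft_diff[OF gi fi] by auto
    have hi: "integrable lborel h" unfolding h_def using gi fi by simp
    have Vhi: "integrable lborel (stft h)" unfolding Vh using gi fi Vgi Vfi by simp
    have "L1norm (\<lambda>z. (stft f z + N z) - stft g z) \<le> L1norm N" using min fM LN by auto
    then have "(1 - 2 * \<kappa>) * L1norm (stft h) \<le> 0" using key[OF gM] unfolding h_def by simp
    then have L0: "L1norm (stft h) = 0"
      using \<kappa> L1norm_nonneg[of "stft h"] by (simp add: mult_le_0_iff)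
    have "stft h z = 0" for z
    proof -
      have "2 * (1 - exp (- pi / 2)) * cmod (stft h z) \<le> 0" using pos_L1_of_point[OF hi Vhi, of z] L0 by simp
      moreover have "2 * (1 - exp (- pi / 2)) > 0" by simp
      ultimately have "cmod (stft h z) \<le> 0" by (meson mult_le_0_iff not_less norm_ge_zero order_le_less_trans)
      then show ?thesis by simp
    qed
    then have "AE t in lborel. h t = 0" by (intro stft_inj hi) auto
    then show "AE t in lborel. g t = f t" by eventually_elim (simp add: h_def)
  qed
  show ?thesis using part1 part2 part3 unfolding D_def by blast
qed


end
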